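(* Let $M$ be a pointed metric space which is not uniformly discrete and let $X$ be a non-zero Banach space. Then the norm of $\mathcal F(M)\widehat{\otimes}_\pi X$ is octahedral.
   Context: All Banach spaces are real. $\mathcal F(M)$ is the Lipschitz-free space over $M$ (closed linear span of evaluation functionals $\delta_p$ in the dual of the space $\mathrm{Lip}_0(M)$ of real Lipschitz functions vanishing at the base point), $\widehat{\otimes}_\pi$ is the projective tensor product. $M$ is uniformly discrete if $\inf\{d(x,y):x\neq y\}>0$. A Banach space $Z$ is octahedral if for every $x_1,\dots,x_n\in S_Z$ and $\varepsilon>0$ there is $y\in S_Z$ with $\|x_i-y\|\ge 2-\varepsilon$ for all $i$. *)

theory Defs
  imports "HOL-Analysis.Analysis" "HOL-Library.Function_Algebras"
begin

instantiation "fun" :: (type, real_vector) real_vector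
begin
definition scaleR_fun :: "real \<Rightarrow> ('a \<Rightarrow> 'b) \<Rightarrow> 'a \<Rightarrow> 'b" where
  "scaleR_fun c f = (\<lambda>x. c *\<^sub>R f x)"
instance
  by standard (auto simp: scaleR_fun_def fun_eq_iff scaleR_add_right scaleR_add_left)
end

definition uniformly_discrete :: "'m::metric_space set \<Rightarrow> bool" where
  "uniformly_discrete M \<longleftrightarrow>
     (\<exists>\<delta>>0. \<forall>x\<in>M. \<forall>y\<in>M. x \<noteq> y \<longrightarrow> dist x y \<ge> \<delta>)"

text \<open>A normed space is given by a linear subspace S of a real vector space (of functions)
  together with a norm N on it.\<close>

definition lin_on :: "'a::real_vector set \<Rightarrow> ('a \<Rightarrow> real) \<Rightarrow> bool" where
  "lin_on S \<phi> \<longleftrightarrow> (\<forall>f\<in>S. \<forall>g\<in>S. \<forall>c::real. \<phi> (c *\<^sub>R f + g) = c * \<phi> f + \<phi> g)"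

definition dual_space :: "'a::real_vector set \<Rightarrow> ('a \<Rightarrow> real) \<Rightarrow> ('a \<Rightarrow> real) set" where
  "dual_space S N = {\<phi>. lin_on S \<phi> \<and> (\<forall>f. f \<notin> S \<longrightarrow> \<phi> f = 0) \<and>
      (\<exists>C. \<forall>f\<in>S. N f \<le> 1 \<longrightarrow> \<bar>\<phi> f\<bar> \<le> C)}"

definition dual_norm :: "'a::real_vector set \<Rightarrow> ('a \<Rightarrow> real) \<Rightarrow> ('a \<Rightarrow> real) \<Rightarrow> real" where
  "dual_norm S N \<phi> = Sup {\<bar>\<phi> f\<bar> | f. f \<in> S \<and> N f \<le> 1}"

definition restr :: "'a set \<Rightarrow> ('a \<Rightarrow> real) \<Rightarrow> 'a \<Rightarrow> real" where
  "restr S \<phi> = (\<lambda>f. if f \<in> S then \<phi> f else 0)"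

definition closed_span_dual ::
  "'a::real_vector set \<Rightarrow> ('a \<Rightarrow> real) \<Rightarrow> ('a \<Rightarrow> real) set \<Rightarrow> ('a \<Rightarrow> real) set" where
  "closed_span_dual S N G =
     {\<phi> \<in> dual_space S N. \<forall>e>0. \<exists>\<psi>\<in>span G. dual_norm S N (\<phi> - \<psi>) < e}"

definition lip0 :: "'m::metric_space \<Rightarrow> ('m \<Rightarrow> real) set" where
  "lip0 p0 = {f. f p0 = 0 \<and> (\<exists>L. L-lipschitz_on UNIV f)}"

definition lipnorm :: "('m::metric_space \<Rightarrow> real) \<Rightarrow> real" where
  "lipnorm f = Inf {L. L-lipschitz_on UNIV f}"

definition free_space :: "'m::metric_space \<Rightarrow> (('m \<Rightarrow> real) \<Rightarrow> real) set" where
  "free_space p0 = closed_span_dual (lip0 p0) lipnorm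
      (range (\<lambda>p. restr (lip0 p0) (\<lambda>f. f p)))"

definition free_norm :: "'m::metric_space \<Rightarrow> (('m \<Rightarrow> real) \<Rightarrow> real) \<Rightarrow> real" where
  "free_norm p0 = dual_norm (lip0 p0) lipnorm"

definition bil :: "'v::real_vector set \<Rightarrow> ('v \<Rightarrow> real) \<Rightarrow> ('v \<Rightarrow> 'x::real_normed_vector \<Rightarrow> real) set" where
  "bil V NV = {B. (\<forall>x. lin_on V (\<lambda>v. B v x)) \<and> (\<forall>v\<in>V. linear (B v)) \<and>
      (\<forall>v. v \<notin> V \<longrightarrow> B v = (\<lambda>x. 0)) \<and>
      (\<exists>C. \<forall>v\<in>V. \<forall>x. \<bar>B v x\<bar> \<le> C * NV v * norm x)}"

definition bilnorm :: "'v::real_vector set \<Rightarrow> ('v \<Rightarrow> real) \<Rightarrow> ('v \<Rightarrow> 'x::real_normed_vector \<Rightarrow> real) \<Rightarrow> real" where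
  "bilnorm V NV B = Sup {\<bar>B v x\<bar> | v x. v \<in> V \<and> NV v \<le> 1 \<and> norm x \<le> 1}"

text \<open>The projective tensor product, realized (isometrically, by the duality
  (V \<otimes>_\<pi> X)^* = B(V \<times> X)) as the closed linear span of the elementary tensors
  v \<otimes> x = (B \<mapsto> B v x) in the dual of the space of bounded bilinear forms.\<close>
definition ptensor :: "'v::real_vector set \<Rightarrow> ('v \<Rightarrow> real) \<Rightarrow> (('v \<Rightarrow> 'x::real_normed_vector \<Rightarrow> real) \<Rightarrow> real) set" where
  "ptensor V NV = closed_span_dual (bil V NV) (bilnorm V NV)
      {restr (bil V NV) (\<lambda>B. B v x) | v x. v \<in> V}"

definition ptnorm :: "'v::real_vector set \<Rightarrow> ('v \<Rightarrow> real) \<Rightarrow> (('v \<Rightarrow> 'x::real_normed_vector \<Rightarrow> real) \<Rightarrow> real) \<Rightarrow> real" where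
  "ptnorm V NV = dual_norm (bil V NV) (bilnorm V NV)"

definition octahedral :: "'z set \<Rightarrow> ('z::minus \<Rightarrow> real) \<Rightarrow> bool" where
  "octahedral Z N \<longleftrightarrow>
     (\<forall>A. finite A \<and> A \<subseteq> {z \<in> Z. N z = 1} \<longrightarrow>
        (\<forall>\<epsilon>>0. \<exists>y\<in>Z. N y = 1 \<and> (\<forall>x\<in>A. N (x - y) \<ge> 2 - \<epsilon>)))"

end

theory Submission
  imports Defs
begin

definition hbgood :: "'x::real_normed_vector \<Rightarrow> ('x \<times> real) set \<Rightarrow> bool" where
  "hbgood x0 G \<longleftrightarrow> (0,0) \<in> G \<and> (\<forall>p\<in>G. \<forall>q\<in>G. p + q \<in> G) \<and> (\<forall>c. \<forall>p\<in>G. c *\<^sub>R p \<in> G)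
     \<and> (\<forall>x a b. (x,a) \<in> G \<longrightarrow> (x,b) \<in> G \<longrightarrow> a = b) \<and> (\<forall>x a. (x,a) \<in> G \<longrightarrow> a \<le> norm x)
     \<and> (x0, norm x0) \<in> G"

lemma hb_extend:
  fixes x1 :: "'x::real_normed_vector"
  assumes G: "hbgood x0 G" and x1: "\<forall>a. (x1,a) \<notin> G"
  shows "\<exists>G'. hbgood x0 G' \<and> G \<subseteq> G' \<and> G' \<noteq> G"
proof -
  have z: "(0,0) \<in> G" using G unfolding hbgood_def by blast
  have add: "\<And>x a y b. (x,a) \<in> G \<Longrightarrow> (y,b) \<in> G \<Longrightarrow> (x+y,a+b) \<in> G"
    using G unfolding hbgood_def by (metis add_Pair)
  have sc: "\<And>c x a. (x,a) \<in> G \<Longrightarrow> (c *\<^sub>R x, c*a) \<in> G"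
    using G unfolding hbgood_def by (metis scaleR_Pair real_scaleR_def)
  have fn: "\<And>x a b. (x,a) \<in> G \<Longrightarrow> (x,b) \<in> G \<Longrightarrow> a = b"
    and bd: "\<And>x a. (x,a) \<in> G \<Longrightarrow> a \<le> norm x" and x0: "(x0, norm x0) \<in> G"
    using G unfolding hbgood_def by blast+
  define c where "c = Sup {a - norm (y - x1) | y a. (y,a) \<in> G}"
  have key: "a - norm (y - x1) \<le> norm (y' + x1) - a'" if "(y,a) \<in> G" "(y',a') \<in> G" for y a y' a'
  proof -
    have "a + a' \<le> norm (y + y')" using bd[OF add[OF that]] .
    also have "\<dots> \<le> norm (y - x1) + norm (y' + x1)"
      using norm_triangle_ineq[of "y - x1" "y' + x1"] by simp
    finally show ?thesis by simp
  qed
  have cup: "a - norm (y - x1) \<le> c" if "(y,a) \<in> G" for y a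
    unfolding c_def
    by (rule cSup_upper) (use that key[OF _ z] in \<open>auto intro!: bdd_aboveI[where M="norm (0 + x1) - 0"]\<close>)
  have clow: "c \<le> norm (y' + x1) - a'" if "(y',a') \<in> G" for y' a'
    unfolding c_def
    by (rule cSup_least) (use that key z in auto)
  define G' where "G' = {(y + t *\<^sub>R x1, a + t*c) | y a t. (y,a) \<in> G}"
  have G'I: "(y + t *\<^sub>R x1, a + t*c) \<in> G'" if "(y,a) \<in> G" for y a t
    using that unfolding G'_def by blast
  have "hbgood x0 G'"
    unfolding hbgood_def
  proof (intro conjI ballI allI impI)
    show "(0,0) \<in> G'" using G'I[OF z, of 0] by simp
    show "(x0, norm x0) \<in> G'" using G'I[OF x0, of 0] by simp
  next
    fix p q assume "p \<in> G'" "q \<in> G'"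
    then obtain y a t y' a' t' where p: "p = (y + t *\<^sub>R x1, a + t*c)" "(y,a) \<in> G"
      and q: "q = (y' + t' *\<^sub>R x1, a' + t'*c)" "(y',a') \<in> G" unfolding G'_def by blast
    have "p + q = ((y + y') + (t+t') *\<^sub>R x1, (a+a') + (t+t')*c)"
      using p q by (simp add: algebra_simps)
    then show "p + q \<in> G'" using G'I[OF add[OF p(2) q(2)]] by simp
  next
    fix k p assume "p \<in> G'"
    then obtain y a t where p: "p = (y + t *\<^sub>R x1, a + t*c)" "(y,a) \<in> G" unfolding G'_def by blast
    have "k *\<^sub>R p = (k *\<^sub>R y + (k*t) *\<^sub>R x1, k*a + (k*t)*c)"
      using p by (simp add: algebra_simps)
    then show "k *\<^sub>R p \<in> G'" using G'I[OF sc[OF p(2)]] by simp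
  next
    fix x b1 b2 assume "(x,b1) \<in> G'" "(x,b2) \<in> G'"
    then obtain y a t y' a' t' where p: "x = y + t *\<^sub>R x1" "b1 = a + t*c" "(y,a) \<in> G"
      and q: "x = y' + t' *\<^sub>R x1" "b2 = a' + t'*c" "(y',a') \<in> G" unfolding G'_def by blast
    have tt: "t = t'"
    proof (rule ccontr)
      assume ne: "t \<noteq> t'"
      have d: "(y' - y, a' - a) \<in> G" using add[OF q(3) sc[OF p(3), of "-1"]] by simp
      have "(t - t') *\<^sub>R x1 = y' - y" using p(1) q(1) by (simp add: algebra_simps)
      then have "(1/(t-t')) *\<^sub>R ((t - t') *\<^sub>R x1) = (1/(t-t')) *\<^sub>R (y' - y)" by simp
      then have "x1 = (1/(t-t')) *\<^sub>R (y' - y)" using ne by simp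
      then have "(x1, (1/(t-t')) * (a' - a)) \<in> G" using sc[OF d, of "1/(t-t')"] by simp
      then show False using x1 by blast
    qed
    then have "y = y'" using p(1) q(1) by simp
    then have "a = a'" using fn p(3) q(3) by blast
    then show "b1 = b2" using p q tt by simp
  next
    fix x b assume "(x,b) \<in> G'"
    then obtain y a t where p: "x = y + t *\<^sub>R x1" "b = a + t*c" "(y,a) \<in> G" unfolding G'_def by blast
    show "b \<le> norm x"
    proof (cases t "0::real" rule: linorder_cases)
      case equal then show ?thesis using p bd by simp
    next
      case greater
      have "c \<le> norm ((1/t) *\<^sub>R y + x1) - (1/t)*a" using clow[OF sc[OF p(3)]] .
      then have "t * c \<le> t * (norm ((1/t) *\<^sub>R y + x1) - (1/t)*a)" using greater by (simp add: mult_left_mono)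
      also have "\<dots> = norm (t *\<^sub>R ((1/t) *\<^sub>R y + x1)) - a" using greater by (simp add: right_diff_distrib)
      also have "t *\<^sub>R ((1/t) *\<^sub>R y + x1) = y + t *\<^sub>R x1" using greater by (simp add: scaleR_add_right)
      finally show ?thesis using p by simp
    next
      case less
      define s where "s = -t"
      have s: "s > 0" using less s_def by simp
      have "(1/s)*a - norm ((1/s) *\<^sub>R y - x1) \<le> c" using cup[OF sc[OF p(3)]] .
      then have "s * ((1/s)*a - norm ((1/s) *\<^sub>R y - x1)) \<le> s * c" using s by (simp add: mult_left_mono)
      moreover have "s * ((1/s)*a - norm ((1/s) *\<^sub>R y - x1)) = a - norm (s *\<^sub>R ((1/s) *\<^sub>R y - x1))"
        using s by (simp add: right_diff_distrib)
      moreover have "s *\<^sub>R ((1/s) *\<^sub>R y - x1) = y + t *\<^sub>R x1" using s s_def by (simp add: scaleR_diff_right)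
      ultimately have "a - norm (y + t *\<^sub>R x1) \<le> s * c" by metis
      moreover have "a + t * c = a - s * c" using s_def by simp
      ultimately show ?thesis using p by simp
    qed
  qed
  moreover have "G \<subseteq> G'" using G'I[of _ _ 0] by auto
  moreover have "(x1, c) \<in> G'" using G'I[OF z, of 1] by simp
  ultimately show ?thesis using x1 by blast
qed

lemma hb_chain:
  assumes C: "C \<in> chains {G. hbgood x0 G}" and ne: "C \<noteq> {}"
  shows "hbgood x0 (\<Union>C)"
proof -
  have sub: "C \<subseteq> {G. hbgood x0 G}" and ch: "\<And>A B. A \<in> C \<Longrightarrow> B \<in> C \<Longrightarrow> A \<subseteq> B \<or> B \<subseteq> A"
    using C unfolding chains_def chain_subset_def by blast+
  have two: "\<exists>G\<in>C. p \<in> G \<and> q \<in> G" if "p \<in> \<Union>C" "q \<in> \<Union>C" for p q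
    using that ch by blast
  obtain G1 where G1: "G1 \<in> C" using ne by blast
  show ?thesis unfolding hbgood_def
  proof (intro conjI ballI allI impI)
    show "(0,0) \<in> \<Union>C" using G1 sub unfolding hbgood_def by blast
    show "(x0, norm x0) \<in> \<Union>C" using G1 sub unfolding hbgood_def by blast
  next
    fix p q assume "p \<in> \<Union>C" "q \<in> \<Union>C"
    then obtain G where "G \<in> C" "p \<in> G" "q \<in> G" using two by blast
    then show "p + q \<in> \<Union>C" using sub unfolding hbgood_def by blast
  next
    fix c p assume "p \<in> \<Union>C"
    then obtain G where "G \<in> C" "p \<in> G" by blast
    then show "c *\<^sub>R p \<in> \<Union>C" using sub unfolding hbgood_def by blast
  next
    fix x a b assume "(x,a) \<in> \<Union>C" "(x,b) \<in> \<Union>C"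
    then obtain G where "G \<in> C" "(x,a) \<in> G" "(x,b) \<in> G" using two by blast
    then show "a = b" using sub unfolding hbgood_def by blast
  next
    fix x a assume "(x,a) \<in> \<Union>C"
    then obtain G where "G \<in> C" "(x,a) \<in> G" by blast
    then show "a \<le> norm x" using sub unfolding hbgood_def by blast
  qed
qed

lemma hahn_banach_norming:
  fixes x0 :: "'x::real_normed_vector"
  assumes x0: "x0 \<noteq> 0"
  shows "\<exists>f. linear f \<and> (\<forall>x. \<bar>f x\<bar> \<le> norm x) \<and> f x0 = norm x0"
proof -
  define G0 where "G0 = range (\<lambda>t. (t *\<^sub>R x0, t * norm x0))"
  have G0: "hbgood x0 G0" unfolding hbgood_def G0_def
  proof (intro conjI ballI allI impI)
    show "(0,0) \<in> range (\<lambda>t. (t *\<^sub>R x0, t * norm x0))" by (auto intro: range_eqI[of _ _ 0])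
    show "(x0, norm x0) \<in> range (\<lambda>t. (t *\<^sub>R x0, t * norm x0))" by (auto intro: range_eqI[of _ _ 1])
  next
    fix p q assume "p \<in> range (\<lambda>t. (t *\<^sub>R x0, t * norm x0))" "q \<in> range (\<lambda>t. (t *\<^sub>R x0, t * norm x0))"
    then obtain s t where "p = (s *\<^sub>R x0, s * norm x0)" "q = (t *\<^sub>R x0, t * norm x0)" by blast
    then have "p + q = ((s+t) *\<^sub>R x0, (s+t) * norm x0)" by (simp add: algebra_simps)
    then show "p + q \<in> range (\<lambda>t. (t *\<^sub>R x0, t * norm x0))" by blast
  next
    fix c p assume "p \<in> range (\<lambda>t. (t *\<^sub>R x0, t * norm x0))"
    then obtain s where "p = (s *\<^sub>R x0, s * norm x0)" by blast
    then have "c *\<^sub>R p = ((c * s) *\<^sub>R x0, (c * s) * norm x0)" by (simp add: algebra_simps)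
    then show "c *\<^sub>R p \<in> range (\<lambda>t. (t *\<^sub>R x0, t * norm x0))" by blast
  next
    fix x a b assume "(x,a) \<in> range (\<lambda>t. (t *\<^sub>R x0, t * norm x0))" "(x,b) \<in> range (\<lambda>t. (t *\<^sub>R x0, t * norm x0))"
    then obtain s t where "x = s *\<^sub>R x0" "a = s * norm x0" "x = t *\<^sub>R x0" "b = t * norm x0" by blast
    then show "a = b" using x0 by (metis scaleR_cancel_right)
  next
    fix x a assume "(x,a) \<in> range (\<lambda>t. (t *\<^sub>R x0, t * norm x0))"
    then obtain s where "x = s *\<^sub>R x0" "a = s * norm x0" by blast
    then show "a \<le> norm x" by (simp add: mult_right_mono)
  qed
  have "\<forall>C\<in>chains {G. hbgood x0 G}. \<exists>U\<in>{G. hbgood x0 G}. \<forall>X\<in>C. X \<subseteq> U"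
  proof
    fix C assume C: "C \<in> chains {G. hbgood x0 G}"
    show "\<exists>U\<in>{G. hbgood x0 G}. \<forall>X\<in>C. X \<subseteq> U"
    proof (cases "C = {}")
      case True then show ?thesis using G0 by blast
    next
      case False then show ?thesis using hb_chain[OF C False] by blast
    qed
  qed
  from Zorn_Lemma2[OF this] obtain Mx where Mx: "hbgood x0 Mx"
    and mx: "\<And>X. hbgood x0 X \<Longrightarrow> Mx \<subseteq> X \<Longrightarrow> X = Mx" by blast
  have tot: "\<exists>a. (x,a) \<in> Mx" for x
  proof (rule ccontr)
    assume "\<nexists>a. (x,a) \<in> Mx"
    then obtain G' where "hbgood x0 G'" "Mx \<subseteq> G'" "G' \<noteq> Mx" using hb_extend[OF Mx] by blast
    then show False using mx by blast
  qed
  have z: "(0,0) \<in> Mx" and add: "\<And>x a y b. (x,a) \<in> Mx \<Longrightarrow> (y,b) \<in> Mx \<Longrightarrow> (x+y,a+b) \<in> Mx"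
    and sc: "\<And>c x a. (x,a) \<in> Mx \<Longrightarrow> (c *\<^sub>R x, c*a) \<in> Mx"
    and fn: "\<And>x a b. (x,a) \<in> Mx \<Longrightarrow> (x,b) \<in> Mx \<Longrightarrow> a = b"
    and bd: "\<And>x a. (x,a) \<in> Mx \<Longrightarrow> a \<le> norm x" and xx: "(x0, norm x0) \<in> Mx"
    using Mx unfolding hbgood_def by (blast, metis add_Pair, metis scaleR_Pair real_scaleR_def, blast+)
  define f where "f x = (THE a. (x,a) \<in> Mx)" for x
  have fM: "(x, f x) \<in> Mx" for x
    unfolding f_def using tot[of x] fn by (metis theI)
  have feq: "(x,a) \<in> Mx \<Longrightarrow> f x = a" for x a using fM fn by blast
  have lin: "linear f"
  proof (rule linearI)
    show "f (x + y) = f x + f y" for x y using feq[OF add[OF fM fM]] .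
    show "f (c *\<^sub>R x) = c *\<^sub>R f x" for c x using feq[OF sc[OF fM]] by simp
  qed
  have "\<bar>f x\<bar> \<le> norm x" for x
  proof -
    have "f x \<le> norm x" using bd[OF fM] .
    moreover have "- f x \<le> norm x" using bd[OF sc[OF fM[of x], of "-1"]] by simp
    ultimately show ?thesis by simp
  qed
  moreover have "f x0 = norm x0" using feq[OF xx] .
  ultimately show ?thesis using lin by blast
qed

lemma le_lim_lemma:
  fixes y D A :: real
  assumes h: "\<And>a. a > A \<Longrightarrow> y \<le> D * a" and D: "D \<ge> 0"
  shows "y \<le> D * A"
proof (rule ccontr)
  assume c: "\<not> y \<le> D * A"
  show False
  proof (cases "D = 0")
    case True then show False using h[of "A+1"] c by simp
  next
    case False
    then have Dp: "D > 0" using D by simp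
    define a where "a = A + (y - D*A)/(2*D)"
    have "a > A" unfolding a_def using c Dp by (simp add: field_simps)
    then have "y \<le> D * a" by (rule h)
    also have "D * a = D*A + (y - D*A)/2" unfolding a_def using Dp by (simp add: field_simps)
    finally have "y \<le> D*A + (y - D*A)/2" .
    moreover have "(y - D*A)/2 < y - D*A" using c by (simp add: mult.commute)
    ultimately show False by linarith
  qed
qed

lemma lin_on_zero: "lin_on S \<phi> \<Longrightarrow> 0 \<in> S \<Longrightarrow> \<phi> 0 = 0"
  unfolding lin_on_def by (drule bspec, assumption, drule bspec, assumption, drule spec[of _ "-1"]) simp

lemma lin_on_scale: "lin_on S \<phi> \<Longrightarrow> 0 \<in> S \<Longrightarrow> f \<in> S \<Longrightarrow> \<phi> (c *\<^sub>R f) = c * \<phi> f"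
  using lin_on_zero[of S \<phi>] unfolding lin_on_def by (metis add.right_neutral)

lemma lin_on_add: "lin_on S \<phi> \<Longrightarrow> f \<in> S \<Longrightarrow> g \<in> S \<Longrightarrow> \<phi> (f + g) = \<phi> f + \<phi> g"
  unfolding lin_on_def by (metis mult_1 scaleR_one)

lemma lin_on_diff: "lin_on S \<phi> \<Longrightarrow> f \<in> S \<Longrightarrow> g \<in> S \<Longrightarrow> \<phi> (f - g) = \<phi> f - \<phi> g"
proof -
  assume a: "lin_on S \<phi>" "f \<in> S" "g \<in> S"
  have "\<phi> ((-1) *\<^sub>R g + f) = (-1) * \<phi> g + \<phi> f" using a unfolding lin_on_def by blast
  moreover have "(-1) *\<^sub>R g + f = f - g" by simp
  ultimately show ?thesis by simp
qed

lemma fun_scaleR_apply[simp]: "(c *\<^sub>R F) x = c *\<^sub>R F x"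
  by (simp add: scaleR_fun_def)

lemma dual_space_lin_comb:
  assumes "\<phi> \<in> dual_space S N" "\<psi> \<in> dual_space S N"
  shows "c *\<^sub>R \<phi> + \<psi> \<in> dual_space S N"
proof -
  obtain C1 where C1: "\<forall>f\<in>S. N f \<le> 1 \<longrightarrow> \<bar>\<phi> f\<bar> \<le> C1" using assms(1) unfolding dual_space_def by blast
  obtain C2 where C2: "\<forall>f\<in>S. N f \<le> 1 \<longrightarrow> \<bar>\<psi> f\<bar> \<le> C2" using assms(2) unfolding dual_space_def by blast
  have "\<bar>(c *\<^sub>R \<phi> + \<psi>) f\<bar> \<le> \<bar>c\<bar> * C1 + C2" if "f \<in> S" "N f \<le> 1" for f
  proof -
    have "\<bar>(c *\<^sub>R \<phi> + \<psi>) f\<bar> = \<bar>c * \<phi> f + \<psi> f\<bar>" by simp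
    also have "\<dots> \<le> \<bar>c\<bar> * \<bar>\<phi> f\<bar> + \<bar>\<psi> f\<bar>" by (simp add: abs_mult[symmetric] abs_triangle_ineq)
    also have "\<dots> \<le> \<bar>c\<bar> * C1 + C2" using C1 C2 that by (simp add: add_mono mult_left_mono)
    finally show ?thesis .
  qed
  moreover have "lin_on S (c *\<^sub>R \<phi> + \<psi>)"
    using assms unfolding dual_space_def lin_on_def by (simp add: algebra_simps)
  moreover have "\<forall>f. f \<notin> S \<longrightarrow> (c *\<^sub>R \<phi> + \<psi>) f = 0" using assms unfolding dual_space_def by simp
  ultimately show ?thesis unfolding dual_space_def by blast
qed

lemma dual_space_zero: "0 \<in> dual_space S N"
  unfolding dual_space_def lin_on_def by auto

lemma dual_space_scale: "\<phi> \<in> dual_space S N \<Longrightarrow> c *\<^sub>R \<phi> \<in> dual_space S N"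
  using dual_space_lin_comb[OF _ dual_space_zero] by fastforce

lemma dual_space_add: "\<phi> \<in> dual_space S N \<Longrightarrow> \<psi> \<in> dual_space S N \<Longrightarrow> \<phi> + \<psi> \<in> dual_space S N"
  using dual_space_lin_comb[of \<phi> S N \<psi> 1] by simp

lemma dual_space_diff: "\<phi> \<in> dual_space S N \<Longrightarrow> \<psi> \<in> dual_space S N \<Longrightarrow> \<phi> - \<psi> \<in> dual_space S N"
  using dual_space_lin_comb[of \<psi> S N \<phi> "-1"] by simp

lemma dual_space_span: assumes "G \<subseteq> dual_space S N" "\<phi> \<in> span G" shows "\<phi> \<in> dual_space S N"
  using assms(2)
proof (induction rule: span_induct_alt)
  case base show ?case by (rule dual_space_zero)
next
  case (step c x y) show ?case using step assms(1) by (intro dual_space_lin_comb) auto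
qed

lemma dual_norm_upper:
  assumes "\<phi> \<in> dual_space S N" "f \<in> S" "N f \<le> 1"
  shows "\<bar>\<phi> f\<bar> \<le> dual_norm S N \<phi>"
proof -
  obtain C where C: "\<forall>f\<in>S. N f \<le> 1 \<longrightarrow> \<bar>\<phi> f\<bar> \<le> C" using assms(1) unfolding dual_space_def by blast
  show ?thesis unfolding dual_norm_def
    by (rule cSup_upper) (use assms C in \<open>auto intro!: bdd_aboveI[of _ C]\<close>)
qed

lemma dual_norm_least:
  assumes "0 \<in> S" "N 0 \<le> 1" "\<And>f. f \<in> S \<Longrightarrow> N f \<le> 1 \<Longrightarrow> \<bar>\<phi> f\<bar> \<le> D"
  shows "dual_norm S N \<phi> \<le> D"
  unfolding dual_norm_def by (rule cSup_least) (use assms in auto)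

lemma dual_norm_nonneg:
  assumes "\<phi> \<in> dual_space S N" "0 \<in> S" "N 0 \<le> 1"
  shows "0 \<le> dual_norm S N \<phi>"
  using dual_norm_upper[OF assms(1,2,3)] by simp

lemma dual_norm_triangle:
  assumes "\<phi> \<in> dual_space S N" "\<psi> \<in> dual_space S N" "0 \<in> S" "N 0 \<le> 1"
  shows "dual_norm S N (\<phi> + \<psi>) \<le> dual_norm S N \<phi> + dual_norm S N \<psi>"
proof (rule dual_norm_least[where S=S and N=N, OF assms(3,4)])
  fix f assume "f \<in> S" "N f \<le> 1"
  then show "\<bar>(\<phi> + \<psi>) f\<bar> \<le> dual_norm S N \<phi> + dual_norm S N \<psi>"
    using dual_norm_upper[OF assms(1)] dual_norm_upper[OF assms(2)] abs_triangle_ineq[of "\<phi> f" "\<psi> f"]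
    by fastforce
qed

lemma dual_norm_scale_le:
  assumes "\<phi> \<in> dual_space S N" "0 \<in> S" "N 0 \<le> 1"
  shows "dual_norm S N (c *\<^sub>R \<phi>) \<le> \<bar>c\<bar> * dual_norm S N \<phi>"
proof (rule dual_norm_least[where S=S and N=N, OF assms(2,3)])
  fix f assume "f \<in> S" "N f \<le> 1"
  then show "\<bar>(c *\<^sub>R \<phi>) f\<bar> \<le> \<bar>c\<bar> * dual_norm S N \<phi>"
    using dual_norm_upper[OF assms(1)] by (simp add: abs_mult mult_left_mono)
qed

lemma dual_norm_scale:
  assumes "\<phi> \<in> dual_space S N" "0 \<in> S" "N 0 \<le> 1"
  shows "dual_norm S N (c *\<^sub>R \<phi>) = \<bar>c\<bar> * dual_norm S N \<phi>"
proof (cases "c = 0")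
  case True
  have "dual_norm S N (c *\<^sub>R \<phi>) \<le> 0" using dual_norm_scale_le[OF assms, of c] True by simp
  moreover have "0 \<le> dual_norm S N (c *\<^sub>R \<phi>)" using dual_norm_nonneg[OF dual_space_scale[OF assms(1)] assms(2,3)] .
  ultimately show ?thesis using True by simp
next
  case False
  have "dual_norm S N \<phi> = dual_norm S N ((1/c) *\<^sub>R (c *\<^sub>R \<phi>))" using False by simp
  also have "\<dots> \<le> \<bar>1/c\<bar> * dual_norm S N (c *\<^sub>R \<phi>)"
    by (rule dual_norm_scale_le[OF dual_space_scale[OF assms(1)] assms(2,3)])
  finally have "\<bar>c\<bar> * dual_norm S N \<phi> \<le> dual_norm S N (c *\<^sub>R \<phi>)" using False
    by (simp add: field_simps abs_divide)
  then show ?thesis using dual_norm_scale_le[OF assms, of c] by simp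
qed

lemma dual_bound:
  assumes \<phi>: "\<phi> \<in> dual_space S N" and S0: "0 \<in> S" "N 0 \<le> 1"
    and sc: "\<And>f c. f \<in> S \<Longrightarrow> c > 0 \<Longrightarrow> c *\<^sub>R f \<in> S \<and> N (c *\<^sub>R f) \<le> c * N f"
    and nn: "\<And>f. f \<in> S \<Longrightarrow> N f \<ge> 0"
    and f: "f \<in> S"
  shows "\<bar>\<phi> f\<bar> \<le> dual_norm S N \<phi> * N f"
proof -
  have lin: "lin_on S \<phi>" using \<phi> unfolding dual_space_def by blast
  have "\<bar>\<phi> f\<bar> \<le> dual_norm S N \<phi> * a" if a: "a > N f" for a
  proof -
    have ap: "a > 0" using a nn[OF f] by simp
    have 1: "(1/a) *\<^sub>R f \<in> S" "N ((1/a) *\<^sub>R f) \<le> (1/a) * N f" using sc[OF f, of "1/a"] ap by auto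
    have "(1/a) * N f \<le> 1" using a ap by (simp add: field_simps)
    then have "\<bar>\<phi> ((1/a) *\<^sub>R f)\<bar> \<le> dual_norm S N \<phi>" using dual_norm_upper[OF \<phi> 1(1)] 1(2) by simp
    then have "\<bar>\<phi> f\<bar> / a \<le> dual_norm S N \<phi>" using lin_on_scale[OF lin S0(1) f, of "1/a"] ap
      by (simp add: abs_mult)
    then show ?thesis using ap by (simp add: field_simps)
  qed
  then show ?thesis using le_lim_lemma dual_norm_nonneg[OF \<phi> S0] by blast
qed

lemma csd_sub_dual: "closed_span_dual S N G \<subseteq> dual_space S N"
  unfolding closed_span_dual_def by blast

lemma csd_base:
  assumes "G \<subseteq> dual_space S N" "g \<in> G" "0 \<in> S" "N 0 \<le> 1"
  shows "g \<in> closed_span_dual S N G"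
proof -
  have "dual_norm S N (g - g) < e" if "e > 0" for e
  proof -
    have "dual_norm S N (g - g) \<le> 0" by (rule dual_norm_least[where S=S and N=N, OF assms(3,4)]) simp
    then show ?thesis using that by simp
  qed
  then show ?thesis unfolding closed_span_dual_def using assms span_base[of g G] by blast
qed

lemma csd_lin_comb:
  assumes G: "G \<subseteq> dual_space S N" and S0: "0 \<in> S" "N 0 \<le> 1"
    and a: "\<phi> \<in> closed_span_dual S N G" "\<psi> \<in> closed_span_dual S N G"
  shows "c *\<^sub>R \<phi> + \<psi> \<in> closed_span_dual S N G"
proof -
  have \<phi>d: "\<phi> \<in> dual_space S N" and \<psi>d: "\<psi> \<in> dual_space S N" using a unfolding closed_span_dual_def by auto
  have "\<exists>\<xi>\<in>span G. dual_norm S N (c *\<^sub>R \<phi> + \<psi> - \<xi>) < e" if e: "e > 0" for e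
  proof -
    have e1: "e / (2 * (\<bar>c\<bar> + 1)) > 0" using e by (simp add: add_pos_nonneg)
    obtain \<xi>1 where \<xi>1: "\<xi>1 \<in> span G" "dual_norm S N (\<phi> - \<xi>1) < e / (2 * (\<bar>c\<bar> + 1))"
      using a(1) e1 unfolding closed_span_dual_def by blast
    have e2: "e / 2 > 0" using e by simp
    obtain \<xi>2 where \<xi>2: "\<xi>2 \<in> span G" "dual_norm S N (\<psi> - \<xi>2) < e / 2"
      using a(2) e2 unfolding closed_span_dual_def by blast
    have d1: "\<phi> - \<xi>1 \<in> dual_space S N" by (rule dual_space_diff[OF \<phi>d dual_space_span[OF G \<xi>1(1)]])
    have d2: "\<psi> - \<xi>2 \<in> dual_space S N" by (rule dual_space_diff[OF \<psi>d dual_space_span[OF G \<xi>2(1)]])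
    have eq: "c *\<^sub>R \<phi> + \<psi> - (c *\<^sub>R \<xi>1 + \<xi>2) = c *\<^sub>R (\<phi> - \<xi>1) + (\<psi> - \<xi>2)"
      by (simp add: algebra_simps)
    have "dual_norm S N (c *\<^sub>R (\<phi> - \<xi>1) + (\<psi> - \<xi>2)) \<le> dual_norm S N (c *\<^sub>R (\<phi> - \<xi>1)) + dual_norm S N (\<psi> - \<xi>2)"
      by (rule dual_norm_triangle[OF dual_space_scale[OF d1] d2 S0])
    also have "\<dots> \<le> \<bar>c\<bar> * dual_norm S N (\<phi> - \<xi>1) + dual_norm S N (\<psi> - \<xi>2)"
      using dual_norm_scale_le[OF d1 S0] by simp
    also have "\<dots> \<le> \<bar>c\<bar> * (e / (2 * (\<bar>c\<bar> + 1))) + e/2"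
    proof -
      have "\<bar>c\<bar> * dual_norm S N (\<phi> - \<xi>1) \<le> \<bar>c\<bar> * (e / (2 * (\<bar>c\<bar> + 1)))"
        by (rule mult_left_mono) (use \<xi>1(2) in auto)
      then show ?thesis using \<xi>2(2) by linarith
    qed
    also have "\<dots> < e"
    proof -
      have "\<bar>c\<bar> * (e / (2 * (\<bar>c\<bar> + 1))) = (e/2) * (\<bar>c\<bar> / (\<bar>c\<bar> + 1))" by simp
      also have "\<dots> < (e/2) * 1" using e by (intro mult_strict_left_mono) auto
      finally show ?thesis by linarith
    qed
    finally have "dual_norm S N (c *\<^sub>R \<phi> + \<psi> - (c *\<^sub>R \<xi>1 + \<xi>2)) < e" unfolding eq .
    moreover have "c *\<^sub>R \<xi>1 + \<xi>2 \<in> span G" using \<xi>1(1) \<xi>2(1) by (simp add: span_add span_scale)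
    ultimately show ?thesis by blast
  qed
  then show ?thesis unfolding closed_span_dual_def using dual_space_lin_comb[OF \<phi>d \<psi>d] by blast
qed

lemma csd_zero:
  assumes "0 \<in> S" "N 0 \<le> 1"
  shows "0 \<in> closed_span_dual S N G"
proof -
  have "dual_norm S N (0 - 0) \<le> 0" by (rule dual_norm_least[where S=S and N=N, OF assms]) simp
  then have "\<forall>e>0. \<exists>\<psi>\<in>span G. dual_norm S N (0 - \<psi>) < e" using span_zero by force
  then show ?thesis unfolding closed_span_dual_def using dual_space_zero by blast
qed

lemma csd_scale:
  assumes "G \<subseteq> dual_space S N" "0 \<in> S" "N 0 \<le> 1" "\<phi> \<in> closed_span_dual S N G"
  shows "c *\<^sub>R \<phi> \<in> closed_span_dual S N G"
proof -
  have "c *\<^sub>R \<phi> + 0 \<in> closed_span_dual S N G"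
    by (rule csd_lin_comb[OF assms(1,2,3,4) csd_zero[where S=S and N=N, OF assms(2,3)]])
  then show ?thesis by simp
qed

lemma csd_add:
  assumes "G \<subseteq> dual_space S N" "0 \<in> S" "N 0 \<le> 1" "\<phi> \<in> closed_span_dual S N G" "\<psi> \<in> closed_span_dual S N G"
  shows "\<phi> + \<psi> \<in> closed_span_dual S N G"
  using csd_lin_comb[OF assms, of 1] by simp

lemma csd_diff:
  assumes "G \<subseteq> dual_space S N" "0 \<in> S" "N 0 \<le> 1" "\<phi> \<in> closed_span_dual S N G" "\<psi> \<in> closed_span_dual S N G"
  shows "\<phi> - \<psi> \<in> closed_span_dual S N G"
  using csd_lin_comb[OF assms(1,2,3,5,4), of "-1"] by simp

definition dlt :: "'m::metric_space \<Rightarrow> 'm \<Rightarrow> (('m \<Rightarrow> real) \<Rightarrow> real)" where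
  "dlt p0 p = restr (lip0 p0) (\<lambda>f. f p)"

lemma lip0_zero: "0 \<in> lip0 p0"
  unfolding lip0_def by (auto intro!: exI[of _ 0] lipschitz_onI)

lemma lip0_lin:
  fixes f g :: "'m::metric_space \<Rightarrow> real"
  assumes "f \<in> lip0 p0" "g \<in> lip0 p0"
  shows "c *\<^sub>R f + g \<in> lip0 p0"
proof -
  obtain L1 where L1: "L1-lipschitz_on UNIV f" using assms(1) unfolding lip0_def by blast
  obtain L2 where L2: "L2-lipschitz_on UNIV g" using assms(2) unfolding lip0_def by blast
  have "(\<bar>c\<bar> * L1 + L2)-lipschitz_on UNIV (c *\<^sub>R f + g)"
  proof (rule lipschitz_onI)
    fix x y :: 'm
    have "dist ((c *\<^sub>R f + g) x) ((c *\<^sub>R f + g) y) = \<bar>c * (f x - f y) + (g x - g y)\<bar>"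
      by (simp add: dist_real_def algebra_simps)
    also have "\<dots> \<le> \<bar>c\<bar> * \<bar>f x - f y\<bar> + \<bar>g x - g y\<bar>"
      by (metis abs_mult abs_triangle_ineq)
    also have "\<dots> \<le> \<bar>c\<bar> * (L1 * dist x y) + L2 * dist x y"
      using lipschitz_onD[OF L1, of x y] lipschitz_onD[OF L2, of x y]
      by (intro add_mono mult_left_mono) (auto simp: dist_real_def)
    finally show "dist ((c *\<^sub>R f + g) x) ((c *\<^sub>R f + g) y) \<le> (\<bar>c\<bar> * L1 + L2) * dist x y"
      by (simp add: algebra_simps)
    show "0 \<le> \<bar>c\<bar> * L1 + L2" using lipschitz_on_nonneg[OF L1] lipschitz_on_nonneg[OF L2] by simp
  qed
  then show ?thesis using assms unfolding lip0_def by auto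
qed

lemma lip0_scale: "f \<in> lip0 p0 \<Longrightarrow> c *\<^sub>R f \<in> lip0 p0"
  using lip0_lin[OF _ lip0_zero] by fastforce

lemma lipnorm_le: "L-lipschitz_on UNIV f \<Longrightarrow> lipnorm f \<le> L"
  unfolding lipnorm_def
  by (rule cInf_lower) (auto intro!: bdd_belowI[of _ 0] dest: lipschitz_on_nonneg)

lemma lipnorm_nonneg: "f \<in> lip0 p0 \<Longrightarrow> 0 \<le> lipnorm f"
  unfolding lipnorm_def lip0_def
  by (rule cInf_greatest) (auto dest: lipschitz_on_nonneg)

lemma lipnorm_lip:
  assumes "f \<in> lip0 p0"
  shows "\<bar>f x - f y\<bar> \<le> lipnorm f * dist x y"
proof (cases "x = y")
  case True then show ?thesis by simp
next
  case False
  then have d: "dist x y > 0" by simp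
  have "\<bar>f x - f y\<bar> / dist x y \<le> lipnorm f"
    unfolding lipnorm_def
  proof (rule cInf_greatest)
    show "{L. L-lipschitz_on UNIV f} \<noteq> {}" using assms unfolding lip0_def by blast
    fix L assume "L \<in> {L. L-lipschitz_on UNIV f}"
    then have "\<bar>f x - f y\<bar> \<le> L * dist x y" using lipschitz_onD[of L UNIV f x y] by (auto simp: dist_real_def)
    then show "\<bar>f x - f y\<bar> / dist x y \<le> L" using d by (simp add: field_simps)
  qed
  then show ?thesis using d by (simp add: field_simps)
qed

lemma lipnorm_lipschitz: "f \<in> lip0 p0 \<Longrightarrow> (lipnorm f)-lipschitz_on UNIV f"
  using lipnorm_lip[of f p0] lipnorm_nonneg[of f p0]
  by (intro lipschitz_onI) (auto simp: dist_real_def)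

lemma lipnorm_zero_le: "lipnorm (0 :: 'm::metric_space \<Rightarrow> real) \<le> 1"
proof -
  have "lipnorm (0 :: 'm::metric_space \<Rightarrow> real) \<le> 0" by (rule lipnorm_le) (auto intro: lipschitz_onI)
  then show ?thesis by simp
qed

lemma lipnorm_scale:
  assumes "f \<in> lip0 p0" "c > 0"
  shows "lipnorm (c *\<^sub>R f) \<le> c * lipnorm f"
proof (rule lipnorm_le, rule lipschitz_onI)
  fix x y
  have "dist ((c *\<^sub>R f) x) ((c *\<^sub>R f) y) = c * \<bar>f x - f y\<bar>"
    using assms(2) by (simp add: dist_real_def abs_mult right_diff_distrib[symmetric])
  also have "\<dots> \<le> c * (lipnorm f * dist x y)" using lipnorm_lip[OF assms(1)] assms(2) by (simp add: mult_left_mono)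
  finally show "dist ((c *\<^sub>R f) x) ((c *\<^sub>R f) y) \<le> c * lipnorm f * dist x y" by simp
  show "0 \<le> c * lipnorm f" using lipnorm_nonneg[OF assms(1)] assms(2) by simp
qed

lemma dlt_apply: "f \<in> lip0 p0 \<Longrightarrow> dlt p0 p f = f p"
  unfolding dlt_def restr_def by simp

lemma dlt_dual: "dlt p0 p \<in> dual_space (lip0 p0) lipnorm"
proof -
  have "lin_on (lip0 p0) (dlt p0 p)"
    unfolding lin_on_def by (auto simp: dlt_apply lip0_lin)
  moreover have "\<forall>f. f \<notin> lip0 p0 \<longrightarrow> dlt p0 p f = 0" unfolding dlt_def restr_def by simp
  moreover have "\<forall>f\<in>lip0 p0. lipnorm f \<le> 1 \<longrightarrow> \<bar>dlt p0 p f\<bar> \<le> dist p p0"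
  proof (intro ballI impI)
    fix f assume f: "f \<in> lip0 p0" "lipnorm f \<le> 1"
    have "\<bar>f p - f p0\<bar> \<le> lipnorm f * dist p p0" by (rule lipnorm_lip[OF f(1)])
    also have "\<dots> \<le> dist p p0" using f(2) lipnorm_nonneg[OF f(1)] by (intro mult_left_le_one_le) auto
    finally show "\<bar>dlt p0 p f\<bar> \<le> dist p p0" using f(1) by (simp add: dlt_apply lip0_def)
  qed
  ultimately show ?thesis unfolding dual_space_def by blast
qed

lemma free_space_eq: "free_space p0 = closed_span_dual (lip0 p0) lipnorm (range (dlt p0))"
  unfolding free_space_def dlt_def ..

lemma G_dual: "range (dlt p0) \<subseteq> dual_space (lip0 p0) lipnorm"
  using dlt_dual by blast

lemmas L0_unit = lip0_zero lipnorm_zero_le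

lemma V_dual: "v \<in> free_space p0 \<Longrightarrow> v \<in> dual_space (lip0 p0) lipnorm"
  unfolding free_space_eq using csd_sub_dual by blast

lemma V_zero: "0 \<in> free_space p0"
  unfolding free_space_eq by (rule csd_zero[where S="lip0 p0" and N=lipnorm, OF L0_unit])

lemma V_dlt: "dlt p0 p \<in> free_space p0"
  unfolding free_space_eq by (rule csd_base[where S="lip0 p0" and N=lipnorm, OF G_dual _ L0_unit]) simp

lemma V_lin: "v \<in> free_space p0 \<Longrightarrow> w \<in> free_space p0 \<Longrightarrow> c *\<^sub>R v + w \<in> free_space p0"
  unfolding free_space_eq by (rule csd_lin_comb[where S="lip0 p0" and N=lipnorm, OF G_dual L0_unit])

lemma V_scale: "v \<in> free_space p0 \<Longrightarrow> c *\<^sub>R v \<in> free_space p0"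
  unfolding free_space_eq by (rule csd_scale[where S="lip0 p0" and N=lipnorm, OF G_dual L0_unit])

lemma V_diff: "v \<in> free_space p0 \<Longrightarrow> w \<in> free_space p0 \<Longrightarrow> v - w \<in> free_space p0"
  unfolding free_space_eq by (rule csd_diff[where S="lip0 p0" and N=lipnorm, OF G_dual L0_unit])

lemma V_add: "v \<in> free_space p0 \<Longrightarrow> w \<in> free_space p0 \<Longrightarrow> v + w \<in> free_space p0"
  unfolding free_space_eq by (rule csd_add[where S="lip0 p0" and N=lipnorm, OF G_dual L0_unit])

lemma NV_nonneg: "v \<in> free_space p0 \<Longrightarrow> 0 \<le> free_norm p0 v"
  unfolding free_norm_def by (rule dual_norm_nonneg[where S="lip0 p0" and N=lipnorm, OF V_dual L0_unit])

lemma NV_scale: "v \<in> free_space p0 \<Longrightarrow> free_norm p0 (c *\<^sub>R v) = \<bar>c\<bar> * free_norm p0 v"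
  unfolding free_norm_def by (rule dual_norm_scale[where S="lip0 p0" and N=lipnorm, OF V_dual L0_unit])

lemma NV_zero: "free_norm p0 0 = 0"
  using NV_scale[OF V_zero[of p0], of 0] by simp

lemma V_bound:
  assumes "v \<in> free_space p0" "f \<in> lip0 p0"
  shows "\<bar>v f\<bar> \<le> free_norm p0 v * lipnorm f"
  unfolding free_norm_def
  by (rule dual_bound[where S="lip0 p0" and N=lipnorm, OF V_dual[OF assms(1)] L0_unit _ lipnorm_nonneg assms(2)])
     (auto intro: lip0_scale lipnorm_scale)

lemma NV_dlt_diff: "free_norm p0 (dlt p0 p - dlt p0 q) \<le> dist p q"
  unfolding free_norm_def
proof (rule dual_norm_least[where S="lip0 p0" and N=lipnorm, OF L0_unit])
  fix f assume f: "f \<in> lip0 p0" "lipnorm f \<le> 1"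
  have "\<bar>(dlt p0 p - dlt p0 q) f\<bar> = \<bar>f p - f q\<bar>" using f(1) by (simp add: dlt_apply)
  also have "\<dots> \<le> lipnorm f * dist p q" by (rule lipnorm_lip[OF f(1)])
  also have "\<dots> \<le> dist p q" using f(2) lipnorm_nonneg[OF f(1)] by (intro mult_left_le_one_le) auto
  finally show "\<bar>(dlt p0 p - dlt p0 q) f\<bar> \<le> dist p q" .
qed

lemma dlt_p0: "dlt p0 p0 = 0"
  unfolding dlt_def restr_def lip0_def by (auto simp: fun_eq_iff)

abbreviation "BL p0 \<equiv> bil (free_space p0) (free_norm p0)"
abbreviation "BN p0 \<equiv> bilnorm (free_space p0) (free_norm p0)"

lemma bilD:
  assumes "B \<in> bil V NV"
  shows "lin_on V (\<lambda>v. B v x)" "v \<in> V \<Longrightarrow> linear (B v)" "v \<notin> V \<Longrightarrow> B v = (\<lambda>x. 0)"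
    "\<exists>C. \<forall>v\<in>V. \<forall>x. \<bar>B v x\<bar> \<le> C * NV v * norm x"
  using assms unfolding bil_def by auto

lemma bil_zero: "0 \<in> bil V NV"
  unfolding bil_def lin_on_def by (auto intro!: exI[of _ 0] linearI)

lemma bil_lin:
  fixes B B' :: "'v::real_vector \<Rightarrow> 'x::real_normed_vector \<Rightarrow> real"
  assumes B: "B \<in> bil V NV" and B': "B' \<in> bil V NV"
  shows "c *\<^sub>R B + B' \<in> bil V NV"
proof -
  obtain C1 where C1: "\<forall>v\<in>V. \<forall>x. \<bar>B v x\<bar> \<le> C1 * NV v * norm x" using bilD(4)[OF B] by blast
  obtain C2 where C2: "\<forall>v\<in>V. \<forall>x. \<bar>B' v x\<bar> \<le> C2 * NV v * norm x" using bilD(4)[OF B'] by blast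
  have "lin_on V (\<lambda>v. (c *\<^sub>R B + B') v x)" for x
    using bilD(1)[OF B, of x] bilD(1)[OF B', of x] unfolding lin_on_def by (simp add: algebra_simps)
  moreover have "linear ((c *\<^sub>R B + B') v)" if v: "v \<in> V" for v
  proof (rule linearI)
    fix x y :: 'x and r :: real
    show "(c *\<^sub>R B + B') v (x + y) = (c *\<^sub>R B + B') v x + (c *\<^sub>R B + B') v y"
      using linear_add[OF bilD(2)[OF B v]] linear_add[OF bilD(2)[OF B' v]] by (simp add: algebra_simps)
    show "(c *\<^sub>R B + B') v (r *\<^sub>R x) = r *\<^sub>R (c *\<^sub>R B + B') v x"
      using linear_scale[OF bilD(2)[OF B v]] linear_scale[OF bilD(2)[OF B' v]] by (simp add: algebra_simps)
  qed
  moreover have "v \<notin> V \<Longrightarrow> (c *\<^sub>R B + B') v = (\<lambda>x. 0)" for v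
    using bilD(3)[OF B] bilD(3)[OF B'] by (simp add: fun_eq_iff)
  moreover have "\<bar>(c *\<^sub>R B + B') v x\<bar> \<le> (\<bar>c\<bar> * C1 + C2) * NV v * norm x" if "v \<in> V" for v x
  proof -
    have "\<bar>(c *\<^sub>R B + B') v x\<bar> = \<bar>c * B v x + B' v x\<bar>" by simp
    also have "\<dots> \<le> \<bar>c\<bar> * \<bar>B v x\<bar> + \<bar>B' v x\<bar>" by (metis abs_mult abs_triangle_ineq)
    also have "\<dots> \<le> \<bar>c\<bar> * (C1 * NV v * norm x) + C2 * NV v * norm x"
      using C1 C2 that by (intro add_mono mult_left_mono) auto
    finally show ?thesis by (simp add: algebra_simps)
  qed
  ultimately show ?thesis unfolding bil_def by blast
qed

lemma bil_scale: "B \<in> bil V NV \<Longrightarrow> c *\<^sub>R B \<in> bil V NV"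
  using bil_lin[OF _ bil_zero, of B V NV c] by simp

lemma bil_add: "B \<in> bil V NV \<Longrightarrow> B' \<in> bil V NV \<Longrightarrow> B + B' \<in> bil V NV"
  using bil_lin[of B V NV B' 1] by simp

lemma bil_bdd:
  assumes B: "B \<in> bil (free_space p0) (free_norm p0)" and v: "v \<in> free_space p0" "free_norm p0 v \<le> 1"
    and x: "norm x \<le> 1"
  shows "\<bar>B v x\<bar> \<le> BN p0 B"
proof -
  obtain C where C: "\<forall>v\<in>free_space p0. \<forall>x. \<bar>B v x\<bar> \<le> C * free_norm p0 v * norm x" using bilD(4)[OF B] by blast
  have bd: "\<bar>B w y\<bar> \<le> \<bar>C\<bar>" if "w \<in> free_space p0" "free_norm p0 w \<le> 1" "norm y \<le> 1" for w y
  proof -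
    have "\<bar>B w y\<bar> \<le> C * free_norm p0 w * norm y" using C that by blast
    also have "\<dots> \<le> \<bar>C\<bar> * (free_norm p0 w * norm y)" unfolding mult.assoc
      by (intro mult_right_mono) (auto simp: NV_nonneg that)
    also have "\<dots> \<le> \<bar>C\<bar> * 1" using that NV_nonneg[OF that(1)]
      by (intro mult_left_mono) (auto intro: mult_le_one)
    finally show ?thesis by simp
  qed
  show ?thesis unfolding bilnorm_def
    by (rule cSup_upper) (use v x bd in \<open>auto intro!: bdd_aboveI[of _ "\<bar>C\<bar>"]\<close>)
qed

lemma bilnorm_least:
  assumes "\<And>v x. v \<in> free_space p0 \<Longrightarrow> free_norm p0 v \<le> 1 \<Longrightarrow> norm x \<le> 1 \<Longrightarrow> \<bar>B v x\<bar> \<le> D"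
  shows "BN p0 B \<le> D"
  unfolding bilnorm_def
proof (rule cSup_least)
  show "{\<bar>B v x\<bar> |v x. v \<in> free_space p0 \<and> free_norm p0 v \<le> 1 \<and> norm x \<le> 1} \<noteq> {}"
  proof -
    have "\<exists>v x. \<bar>B 0 0\<bar> = \<bar>B v x\<bar> \<and> v \<in> free_space p0 \<and> free_norm p0 v \<le> 1 \<and> norm x \<le> 1"
      using V_zero[of p0] NV_zero[of p0] by (metis norm_zero order_refl zero_le_one)
    then show ?thesis by blast
  qed
  fix r assume "r \<in> {\<bar>B v x\<bar> |v x. v \<in> free_space p0 \<and> free_norm p0 v \<le> 1 \<and> norm x \<le> 1}"
  then show "r \<le> D" using assms by blast
qed

lemma bilnorm_nonneg:
  assumes "B \<in> BL p0" shows "0 \<le> BN p0 B"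
proof -
  have "\<bar>B 0 0\<bar> \<le> BN p0 B" by (rule bil_bdd[OF assms V_zero]) (auto simp: NV_zero)
  then show ?thesis by simp
qed

lemma bil_bound:
  assumes B: "B \<in> BL p0" and v: "v \<in> free_space p0"
  shows "\<bar>B v x\<bar> \<le> BN p0 B * free_norm p0 v * norm x"
proof -
  have lin1: "lin_on (free_space p0) (\<lambda>v. B v y)" for y using bilD(1)[OF B] .
  have lin2: "linear (B v)" using bilD(2)[OF B v] .
  have main: "\<bar>B v x\<bar> \<le> (BN p0 B * b) * a" if a: "a > free_norm p0 v" and b: "b > norm x" for a b
  proof -
    have ap: "a > 0" using a NV_nonneg[OF v] by simp
    have bp: "b > 0" using b norm_ge_zero[of x] by linarith
    have v': "(1/a) *\<^sub>R v \<in> free_space p0" by (rule V_scale[OF v])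
    have "free_norm p0 ((1/a) *\<^sub>R v) = free_norm p0 v / a" using NV_scale[OF v, of "1/a"] ap by simp
    also have "\<dots> \<le> 1" using a ap by simp
    finally have n1: "free_norm p0 ((1/a) *\<^sub>R v) \<le> 1" .
    have n2: "norm ((1/b) *\<^sub>R x) \<le> 1" using b bp by simp
    have e1: "B ((1/a) *\<^sub>R v) ((1/b) *\<^sub>R x) = (1/a) * B v ((1/b) *\<^sub>R x)"
      by (rule lin_on_scale[OF lin1 V_zero v])
    have e2: "B v ((1/b) *\<^sub>R x) = (1/b) * B v x" using linear_scale[OF lin2] by simp
    have eq: "B ((1/a) *\<^sub>R v) ((1/b) *\<^sub>R x) = B v x / (a*b)" unfolding e1 e2 by simp
    have "\<bar>B v x\<bar> / (a*b) \<le> BN p0 B" using bil_bdd[OF B v' n1 n2] unfolding eq using ap bp by simp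
    then show ?thesis using ap bp by (simp add: field_simps)
  qed
  have prev: "\<bar>B v x\<bar> \<le> (BN p0 B * b) * free_norm p0 v" if b: "b > norm x" for b
  proof -
    have "0 \<le> b" using b norm_ge_zero[of x] by linarith
    then show ?thesis using bilnorm_nonneg[OF B] by (intro le_lim_lemma[OF main[OF _ b]]) auto
  qed
  have "\<bar>B v x\<bar> \<le> (BN p0 B * free_norm p0 v) * norm x"
  proof (rule le_lim_lemma)
    fix b assume "b > norm x"
    from prev[OF this] show "\<bar>B v x\<bar> \<le> (BN p0 B * free_norm p0 v) * b" by (simp only: mult_ac)
  next
    show "0 \<le> BN p0 B * free_norm p0 v" by (intro mult_nonneg_nonneg bilnorm_nonneg[OF B] NV_nonneg[OF v])
  qed
  then show ?thesis by simp
qed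

lemma bilnorm_scale_le:
  assumes B: "B \<in> BL p0" shows "BN p0 (c *\<^sub>R B) \<le> \<bar>c\<bar> * BN p0 B"
  by (rule bilnorm_least) (auto simp: abs_mult intro!: mult_left_mono bil_bdd[OF B])

lemma bil_neg_val: "B \<in> BL p0 \<Longrightarrow> BN p0 ((-1) *\<^sub>R B) \<le> BN p0 B"
  using bilnorm_scale_le[of B p0 "-1"] by simp

lemma bil_unit: "0 \<in> BL p0" "BN p0 0 \<le> 1"
proof -
  show "0 \<in> BL p0" by (rule bil_zero)
  show "BN p0 0 \<le> 1" by (rule bilnorm_least) simp
qed

definition GT :: "'m::metric_space \<Rightarrow> (((('m \<Rightarrow> real) \<Rightarrow> real) \<Rightarrow> 'x::real_normed_vector \<Rightarrow> real) \<Rightarrow> real) set" where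
  "GT p0 = {restr (BL p0) (\<lambda>B. B v x) | v x. v \<in> free_space p0}"

lemma ptensor_eq: "ptensor (free_space p0) (free_norm p0) = closed_span_dual (BL p0) (BN p0) (GT p0)"
  unfolding ptensor_def GT_def ..

lemma elem_dual:
  fixes x :: "'x::real_normed_vector" and p0 :: "'m::metric_space"
  assumes v: "v \<in> free_space p0"
  shows "restr (BL p0) (\<lambda>B. B v x) \<in> dual_space (BL p0) (BN p0)"
proof -
  have "lin_on (BL p0) (restr (BL p0) (\<lambda>B. B v x))"
    unfolding lin_on_def restr_def by (auto simp: bil_lin)
  moreover have "\<forall>f. f \<notin> BL p0 \<longrightarrow> restr (BL p0) (\<lambda>B. B v x) f = 0" unfolding restr_def by simp
  moreover have "\<forall>B\<in>BL p0. BN p0 B \<le> 1 \<longrightarrow> \<bar>restr (BL p0) (\<lambda>B. B v x) B\<bar> \<le> free_norm p0 v * norm x"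
  proof (intro ballI impI)
    fix B :: "(('m \<Rightarrow> real) \<Rightarrow> real) \<Rightarrow> 'x \<Rightarrow> real" assume B: "B \<in> BL p0" "BN p0 B \<le> 1"
    have "\<bar>B v x\<bar> \<le> BN p0 B * (free_norm p0 v * norm x)" using bil_bound[OF B(1) v] by (simp add: mult.assoc)
    also have "\<dots> \<le> 1 * (free_norm p0 v * norm x)"
      using B(2) NV_nonneg[OF v] by (intro mult_right_mono) auto
    finally show "\<bar>restr (BL p0) (\<lambda>B. B v x) B\<bar> \<le> free_norm p0 v * norm x" using B(1) by (simp add: restr_def)
  qed
  ultimately show ?thesis unfolding dual_space_def by blast
qed

lemma GT_dual: "GT p0 \<subseteq> dual_space (BL p0) (BN p0)"
  unfolding GT_def using elem_dual by blast

lemma PT_dual: "z \<in> ptensor (free_space p0) (free_norm p0) \<Longrightarrow> z \<in> dual_space (BL p0) (BN p0)"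
  unfolding ptensor_eq using csd_sub_dual by blast

lemma PT_scale: "z \<in> ptensor (free_space p0) (free_norm p0) \<Longrightarrow> c *\<^sub>R z \<in> ptensor (free_space p0) (free_norm p0)"
  unfolding ptensor_eq by (rule csd_scale[where S="BL p0" and N="BN p0", OF GT_dual bil_unit])

lemma PT_elem: "v \<in> free_space p0 \<Longrightarrow> restr (BL p0) (\<lambda>B. B v (x::'x::real_normed_vector)) \<in> ptensor (free_space p0) (free_norm p0)"
  unfolding ptensor_eq by (rule csd_base[where S="BL p0" and N="BN p0", OF GT_dual _ bil_unit]) (auto simp: GT_def)

lemma PT_bound:
  assumes z: "z \<in> dual_space (BL p0) (BN p0)" and B: "B \<in> BL p0"
  shows "\<bar>z B\<bar> \<le> dual_norm (BL p0) (BN p0) z * BN p0 B"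
  by (rule dual_bound[where S="BL p0" and N="BN p0", OF z bil_unit _ bilnorm_nonneg B])
     (auto intro: bil_scale order_trans[OF bilnorm_scale_le])

definition BT :: "'m::metric_space \<Rightarrow> ('m \<Rightarrow> 'x::real_normed_vector \<Rightarrow> real) \<Rightarrow> ((('m \<Rightarrow> real) \<Rightarrow> real) \<Rightarrow> 'x \<Rightarrow> real)" where
  "BT p0 T = (\<lambda>v x. if v \<in> free_space p0 then v (\<lambda>p. T p x) else 0)"

lemma BT_props:
  fixes T :: "'m::metric_space \<Rightarrow> 'x::real_normed_vector \<Rightarrow> real" and p0 :: 'm
  assumes lin: "\<And>p. linear (T p)" and T0: "\<And>x. T p0 x = 0" and L: "L \<ge> 0"
    and lip: "\<And>p q x. \<bar>T p x - T q x\<bar> \<le> L * dist p q * norm x"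
  shows "BT p0 T \<in> BL p0" "BN p0 (BT p0 T) \<le> L" "BT p0 T (dlt p0 p) x = T p x"
proof -
  have g: "(\<lambda>p. T p x) \<in> lip0 p0" "lipnorm (\<lambda>p. T p x) \<le> L * norm x" for x
  proof -
    have l: "(L * norm x)-lipschitz_on UNIV (\<lambda>p. T p x)"
      by (rule lipschitz_onI) (use lip L in \<open>auto simp: dist_real_def algebra_simps\<close>)
    then show "(\<lambda>p. T p x) \<in> lip0 p0" unfolding lip0_def using T0 by blast
    show "lipnorm (\<lambda>p. T p x) \<le> L * norm x" by (rule lipnorm_le[OF l])
  qed
  have gadd: "(\<lambda>p. T p (x + y)) = 1 *\<^sub>R (\<lambda>p. T p x) + (\<lambda>p. T p y)" for x y
    using linear_add[OF lin] by (simp add: fun_eq_iff)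
  have gsc: "(\<lambda>p. T p (c *\<^sub>R x)) = c *\<^sub>R (\<lambda>p. T p x)" for c x
    using linear_scale[OF lin] by (simp add: fun_eq_iff)
  have bd: "\<bar>BT p0 T v x\<bar> \<le> L * free_norm p0 v * norm x" if v: "v \<in> free_space p0" for v x
  proof -
    have "\<bar>BT p0 T v x\<bar> = \<bar>v (\<lambda>p. T p x)\<bar>" using v by (simp add: BT_def)
    also have "\<dots> \<le> free_norm p0 v * lipnorm (\<lambda>p. T p x)" by (rule V_bound[OF v g(1)])
    also have "\<dots> \<le> free_norm p0 v * (L * norm x)" by (rule mult_left_mono[OF g(2) NV_nonneg[OF v]])
    finally show ?thesis by (simp add: mult_ac)
  qed
  show "BT p0 T \<in> BL p0"
    unfolding bil_def
  proof (intro CollectI conjI allI impI ballI)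
    fix x :: 'x
    show "lin_on (free_space p0) (\<lambda>v. BT p0 T v x)"
      unfolding lin_on_def by (auto simp: BT_def V_lin)
  next
    fix v :: "('m \<Rightarrow> real) \<Rightarrow> real" assume v: "v \<in> free_space p0"
    have lv: "lin_on (lip0 p0) v" using V_dual[OF v] unfolding dual_space_def by blast
    show "linear (BT p0 T v)"
    proof (rule linearI)
      fix x y :: 'x and c :: real
      show "BT p0 T v (x + y) = BT p0 T v x + BT p0 T v y"
        using v lin_on_add[OF lv g(1) g(1)] unfolding BT_def gadd by simp
      show "BT p0 T v (c *\<^sub>R x) = c *\<^sub>R BT p0 T v x"
        using v lin_on_scale[OF lv lip0_zero g(1)] unfolding BT_def gsc by simp
    qed
  next
    fix v :: "('m \<Rightarrow> real) \<Rightarrow> real" assume "v \<notin> free_space p0"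
    then show "BT p0 T v = (\<lambda>x. 0)" by (simp add: BT_def fun_eq_iff)
  next
    show "\<exists>C. \<forall>v\<in>free_space p0. \<forall>x. \<bar>BT p0 T v x\<bar> \<le> C * free_norm p0 v * norm x"
      using bd by blast
  qed
  show "BN p0 (BT p0 T) \<le> L"
  proof (rule bilnorm_least)
    fix v and x :: 'x assume v: "v \<in> free_space p0" "free_norm p0 v \<le> 1" "norm x \<le> 1"
    have "\<bar>BT p0 T v x\<bar> \<le> L * (free_norm p0 v * norm x)" using bd[OF v(1)] by (simp add: mult_ac)
    also have "\<dots> \<le> L * 1" using v NV_nonneg[OF v(1)] L by (intro mult_left_mono mult_le_one) auto
    finally show "\<bar>BT p0 T v x\<bar> \<le> L" by simp
  qed
  show "BT p0 T (dlt p0 p) x = T p x"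
    using V_dlt[of p0 p] g(1)[of x] by (simp add: BT_def dlt_apply)
qed

lemma TB_props:
  fixes B :: "(('m::metric_space \<Rightarrow> real) \<Rightarrow> real) \<Rightarrow> 'x::real_normed_vector \<Rightarrow> real"
  assumes B: "B \<in> BL p0"
  shows "linear (\<lambda>x. B (dlt p0 p) x)" "B (dlt p0 p0) x = 0"
    "\<bar>B (dlt p0 p) x - B (dlt p0 q) x\<bar> \<le> BN p0 B * dist p q * norm x"
proof -
  show "linear (\<lambda>x. B (dlt p0 p) x)" using bilD(2)[OF B V_dlt] by simp
  show "B (dlt p0 p0) x = 0" unfolding dlt_p0 by (rule lin_on_zero[OF bilD(1)[OF B] V_zero])
  have "B (dlt p0 p) x - B (dlt p0 q) x = B (dlt p0 p - dlt p0 q) x"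
    by (rule lin_on_diff[OF bilD(1)[OF B] V_dlt V_dlt, symmetric])
  also have "\<bar>\<dots>\<bar> \<le> BN p0 B * free_norm p0 (dlt p0 p - dlt p0 q) * norm x"
    by (rule bil_bound[OF B V_diff[OF V_dlt V_dlt]])
  also have "\<dots> \<le> BN p0 B * dist p q * norm x"
    using NV_dlt_diff bilnorm_nonneg[OF B] by (intro mult_right_mono mult_left_mono) auto
  finally show "\<bar>B (dlt p0 p) x - B (dlt p0 q) x\<bar> \<le> BN p0 B * dist p q * norm x" .
qed

definition mu :: "real \<Rightarrow> real \<Rightarrow> real \<Rightarrow> real" where
  "mu r m t = (if t \<le> r then 0 else min 1 (ln (t/r) / ln m))"

lemma mu_small: "t \<le> r \<Longrightarrow> mu r m t = 0"
  unfolding mu_def by simp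

lemma mu_big: assumes "r > 0" "m > 1" "t \<ge> r * m" shows "mu r m t = 1"
proof -
  have tr: "t > r" using assms by (smt (verit) mult_less_cancel_left1)
  have "m \<le> t/r" using assms by (simp add: field_simps)
  then have "ln (t/r) \<ge> ln m" using assms by simp
  then have "ln (t/r) / ln m \<ge> 1" using assms by simp
  then show ?thesis unfolding mu_def using tr by simp
qed

lemma mu_range: assumes "r > 0" "m > 1" shows "0 \<le> mu r m t" "mu r m t \<le> 1"
proof -
  show "0 \<le> mu r m t" unfolding mu_def using assms by (auto intro!: divide_nonneg_pos)
  show "mu r m t \<le> 1" unfolding mu_def by simp
qed

lemma mu_diff:
  assumes r: "r > 0" and m: "m > 1" and ba: "0 \<le> b" "b \<le> a"
  shows "0 \<le> mu r m a - mu r m b" "(mu r m a - mu r m b) * b \<le> (a - b) / ln m"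
proof -
  have lm: "ln m > 0" using m by simp
  have "0 \<le> mu r m a - mu r m b \<and> (mu r m a - mu r m b) * b \<le> (a - b) / ln m"
  proof (cases "a \<le> r")
    case True
    then show ?thesis using ba lm by (simp add: mu_small)
  next
    case ar: False
    show ?thesis
    proof (cases "b \<le> r")
      case True
      have mb: "mu r m b = 0" using True by (simp add: mu_small)
      have ma: "mu r m a \<le> ln (a/r) / ln m" unfolding mu_def using ar by simp
      have "b * ln (a/r) \<le> r * ln (a/r)" using True ar r by (intro mult_right_mono) auto
      also have "\<dots> \<le> r * (a/r - 1)" using ar r by (intro mult_left_mono ln_le_minus_one) auto
      also have "\<dots> = a - r" using r by (simp add: field_simps)
      also have "\<dots> \<le> a - b" using True by simp
      finally have "b * ln (a/r) \<le> a - b" .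
      then have "(ln (a/r) / ln m) * b \<le> (a - b) / ln m" using lm by (simp add: field_simps)
      moreover have "mu r m a * b \<le> (ln (a/r) / ln m) * b" using ma ba by (intro mult_right_mono) auto
      ultimately show ?thesis using mb mu_range[OF r m, of a] by simp
    next
      case False
      have mbd: "mu r m b = min 1 (ln (b/r) / ln m)" "mu r m a = min 1 (ln (a/r) / ln m)"
        unfolding mu_def using False ar by auto
      have bp: "b > 0" using False r by simp
      have lab: "ln (a/r) - ln (b/r) = ln (a/b)" using bp r ba by (simp add: ln_div)
      have mono: "ln (b/r) \<le> ln (a/r)" using bp r ba by (simp add: divide_right_mono)
      have xy: "ln (b/r) / ln m \<le> ln (a/r) / ln m" using mono lm by (intro divide_right_mono) auto
      then have d1: "0 \<le> mu r m a - mu r m b" unfolding mbd min_def by auto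
      have d2: "mu r m a - mu r m b \<le> ln (a/r) / ln m - ln (b/r) / ln m"
        unfolding mbd min_def using xy by auto
      then have d2: "mu r m a - mu r m b \<le> (ln (a/r) - ln (b/r)) / ln m" by (simp add: diff_divide_distrib)
      have "b * ln (a/b) \<le> b * (a/b - 1)" using bp ba by (intro mult_left_mono ln_le_minus_one) auto
      also have "\<dots> = a - b" using bp by (simp add: field_simps)
      finally have "b * ln (a/b) \<le> a - b" .
      then have "((ln (a/r) - ln (b/r)) / ln m) * b \<le> (a - b) / ln m" unfolding lab using lm by (simp add: field_simps)
      moreover have "(mu r m a - mu r m b) * b \<le> ((ln (a/r) - ln (b/r)) / ln m) * b"
        using d2 ba by (intro mult_right_mono) auto
      ultimately show ?thesis using d1 by simp
    qed
  qed
  then show "0 \<le> mu r m a - mu r m b" "(mu r m a - mu r m b) * b \<le> (a - b) / ln m" by auto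
qed

lemma cutoff_lip_half:
  fixes g :: "'m::metric_space \<Rightarrow> real"
  assumes r: "r > 0" and m: "m > 1" and K: "K \<ge> 0"
    and lip: "\<And>p q. \<bar>g p - g q\<bar> \<le> K * dist p q"
    and ord: "dist q v \<le> dist p v"
  shows "\<bar>(g v + mu r m (dist p v) * (g p - g v)) - (g v + mu r m (dist q v) * (g q - g v))\<bar>
          \<le> K * (1 + 1 / ln m) * dist p q"
proof -
  let ?a = "dist p v" and ?b = "dist q v"
  have lm: "ln m > 0" using m by simp
  have md: "0 \<le> mu r m ?a - mu r m ?b" "(mu r m ?a - mu r m ?b) * ?b \<le> (?a - ?b) / ln m"
    using mu_diff[OF r m zero_le_dist ord] by auto
  have ab: "?a - ?b \<le> dist p q" using dist_triangle[of p v q] by (simp add: dist_commute)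
  have eq: "(g v + mu r m ?a * (g p - g v)) - (g v + mu r m ?b * (g q - g v))
      = mu r m ?a * (g p - g q) + (mu r m ?a - mu r m ?b) * (g q - g v)" by (simp add: algebra_simps)
  have "\<bar>mu r m ?a * (g p - g q) + (mu r m ?a - mu r m ?b) * (g q - g v)\<bar>
      \<le> mu r m ?a * \<bar>g p - g q\<bar> + (mu r m ?a - mu r m ?b) * \<bar>g q - g v\<bar>"
  proof -
    have "\<bar>mu r m ?a * (g p - g q)\<bar> = mu r m ?a * \<bar>g p - g q\<bar>"
      using mu_range[OF r m, of ?a] by (simp add: abs_mult)
    moreover have "\<bar>(mu r m ?a - mu r m ?b) * (g q - g v)\<bar> = (mu r m ?a - mu r m ?b) * \<bar>g q - g v\<bar>"
      using md(1) by (simp add: abs_mult)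
    ultimately show ?thesis using abs_triangle_ineq by (metis)
  qed
  also have "\<dots> \<le> 1 * (K * dist p q) + (mu r m ?a - mu r m ?b) * (K * ?b)"
    using mu_range[OF r m, of ?a] md(1) lip[of p q] lip[of q v] K
    by (intro add_mono mult_mono mult_left_mono) auto
  also have "(mu r m ?a - mu r m ?b) * (K * ?b) = K * ((mu r m ?a - mu r m ?b) * ?b)" by simp
  also have "\<dots> \<le> K * (dist p q / ln m)"
  proof -
    have "(?a - ?b) / ln m \<le> dist p q / ln m" using ab lm by (intro divide_right_mono) auto
    then show ?thesis using md(2) K by (intro mult_left_mono) auto
  qed
  finally show ?thesis unfolding eq by (simp add: algebra_simps)
qed

lemma cutoff_lip:
  fixes g :: "'m::metric_space \<Rightarrow> real"
  assumes r: "r > 0" and m: "m > 1" and K: "K \<ge> 0"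
    and lip: "\<And>p q. \<bar>g p - g q\<bar> \<le> K * dist p q"
  shows "\<bar>(g v + mu r m (dist p v) * (g p - g v)) - (g v + mu r m (dist q v) * (g q - g v))\<bar>
          \<le> K * (1 + 1 / ln m) * dist p q"
proof (cases "dist q v \<le> dist p v")
  case True then show ?thesis by (rule cutoff_lip_half[OF r m K lip])
next
  case False
  then have "\<bar>(g v + mu r m (dist q v) * (g q - g v)) - (g v + mu r m (dist p v) * (g p - g v))\<bar>
          \<le> K * (1 + 1 / ln m) * dist q p" by (intro cutoff_lip_half[OF r m K lip]) auto
  then show ?thesis by (simp add: abs_minus_commute dist_commute)
qed

definition Tm :: "('m::metric_space \<Rightarrow> 'x::real_normed_vector \<Rightarrow> real) \<Rightarrow> ('x \<Rightarrow> real) \<Rightarrow> 'm \<Rightarrow> 'm \<Rightarrow> real \<Rightarrow> real \<Rightarrow> 'm \<Rightarrow> 'x \<Rightarrow> real" where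
  "Tm T xs u v \<rho> m = (\<lambda>p x. T v x + mu (m*\<rho>) m (dist p v) * (T p x - T v x) + min 0 (dist p u - \<rho>) * xs x)"

lemma Tm_lip_half:
  fixes T :: "'m::metric_space \<Rightarrow> 'x::real_normed_vector \<Rightarrow> real"
  assumes Tlip: "\<And>p q x. \<bar>T p x - T q x\<bar> \<le> dist p q * norm x"
    and xs: "\<And>x. \<bar>xs x\<bar> \<le> norm x"
    and \<rho>: "\<rho> = dist u v" "\<rho> > 0" and m: "m \<ge> 4"
    and hp: "min 0 (dist p u - \<rho>) \<noteq> 0"
  shows "\<bar>Tm T xs u v \<rho> m p x - Tm T xs u v \<rho> m q x\<bar> \<le> (1 + 1/ln m + 2/m) * dist p q * norm x"
proof -
  define r where "r = m * \<rho>"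
  have r: "r > 0" using \<rho> m unfolding r_def by simp
  have m1: "m > 1" using m by simp
  have lm: "ln m > 0" using m1 by simp
  define g where "g p = T p x" for p
  define G where "G p = g v + mu r m (dist p v) * (g p - g v)" for p
  define h where "h p = min 0 (dist p u - \<rho>)" for p
  have TmE: "Tm T xs u v \<rho> m p x = G p + h p * xs x" for p
    unfolding Tm_def G_def h_def g_def r_def by simp
  have K: "norm x \<ge> 0" by simp
  have Gl: "\<bar>G p - G q\<bar> \<le> norm x * (1 + 1 / ln m) * dist p q" for p q
    unfolding G_def by (rule cutoff_lip[OF r m1 K]) (use Tlip in \<open>simp add: g_def mult.commute\<close>)
  have hl: "\<bar>h p - h q\<bar> \<le> dist p q" for p q
  proof -
    have "\<bar>h p - h q\<bar> \<le> \<bar>dist p u - dist q u\<bar>" unfolding h_def by (simp add: min_def)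
    also have "\<dots> \<le> dist p q" using abs_dist_diff_le[of p u q] by (simp add: dist_commute)
    finally show ?thesis .
  qed
  have C1: "1 \<le> 1 + 1/ln m + 2/m" using lm m by simp
  have pu: "dist p u < \<rho>" using hp by (auto simp: min_def split: if_splits)
  have pv: "dist p v < 2 * \<rho>" using dist_triangle[of p v u] pu \<rho>(1) by (simp add: dist_commute)
  have "2 * \<rho> \<le> m * \<rho>" using m \<rho> by (intro mult_right_mono) auto
  then have Gp: "G p = g v" unfolding G_def using pv r_def by (subst mu_small) auto
  show ?thesis
  proof (cases "dist q v \<le> r")
    case True
    have Gq: "G q = g v" unfolding G_def using True by (subst mu_small) auto
    have "\<bar>Tm T xs u v \<rho> m p x - Tm T xs u v \<rho> m q x\<bar> = \<bar>(h p - h q) * xs x\<bar>"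
      unfolding TmE Gp Gq by (simp add: algebra_simps)
    also have "\<dots> \<le> dist p q * norm x" unfolding abs_mult using hl[of p q] xs[of x]
      by (intro mult_mono) auto
    also have "\<dots> \<le> (1 + 1/ln m + 2/m) * dist p q * norm x"
      using C1 mult_right_mono[OF C1, of "dist p q * norm x"] by (simp add: mult.assoc)
    finally show ?thesis .
  next
    case False
    have qu: "dist q u \<ge> \<rho>"
    proof -
      have "dist q v \<le> dist q u + dist u v" by (rule dist_triangle)
      moreover have "r \<ge> 2 * \<rho>" using m \<rho> unfolding r_def by simp
      ultimately show ?thesis using False \<rho>(1) by simp
    qed
    have hq: "h q = 0" unfolding h_def using qu by simp
    have dpq: "dist p q \<ge> m * \<rho> / 2"
    proof -
      have "dist q v \<le> dist q p + dist p v" by (rule dist_triangle)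
      then have "dist p q \<ge> r - 2 * \<rho>" using False pv by (simp add: dist_commute)
      moreover have "r - 2 * \<rho> \<ge> m * \<rho> / 2" using m \<rho> unfolding r_def by (simp add: field_simps)
      ultimately show ?thesis by simp
    qed
    have hpb: "\<bar>h p\<bar> \<le> \<rho>" unfolding h_def using \<rho> by (simp add: min_def)
    have rho_le: "\<rho> \<le> 2 / m * dist p q" using dpq m by (simp add: field_simps)
    have "\<bar>Tm T xs u v \<rho> m p x - Tm T xs u v \<rho> m q x\<bar> = \<bar>(G p - G q) + h p * xs x\<bar>"
      unfolding TmE hq by (simp add: algebra_simps)
    also have "\<dots> \<le> \<bar>G p - G q\<bar> + \<bar>h p\<bar> * \<bar>xs x\<bar>" by (metis abs_mult abs_triangle_ineq)
    also have "\<dots> \<le> norm x * (1 + 1 / ln m) * dist p q + (2 / m * dist p q) * norm x"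
      using Gl[of p q] hpb rho_le xs[of x] by (intro add_mono mult_mono) auto
    also have "\<dots> = (1 + 1/ln m + 2/m) * dist p q * norm x" by (simp add: algebra_simps)
    finally show ?thesis .
  qed
qed

lemma Tm_props:
  fixes T :: "'m::metric_space \<Rightarrow> 'x::real_normed_vector \<Rightarrow> real"
  assumes lin: "\<And>p. linear (T p)" and Tlip: "\<And>p q x. \<bar>T p x - T q x\<bar> \<le> dist p q * norm x"
    and xs: "linear xs" "\<And>x. \<bar>xs x\<bar> \<le> norm x"
    and \<rho>: "\<rho> = dist u v" "\<rho> > 0" and m: "m \<ge> 4"
  shows "linear (Tm T xs u v \<rho> m p)"
    "\<bar>Tm T xs u v \<rho> m p x - Tm T xs u v \<rho> m q x\<bar> \<le> (1 + 1/ln m + 2/m) * dist p q * norm x"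
    "t = v \<or> m * m * \<rho> \<le> dist t v \<Longrightarrow> Tm T xs u v \<rho> m t x = T t x"
    "Tm T xs u v \<rho> m u x - Tm T xs u v \<rho> m v x = - \<rho> * xs x"
proof -
  have m1: "m > 1" using m by simp
  have r: "m * \<rho> > 0" using m \<rho> by simp
  show "linear (Tm T xs u v \<rho> m p)"
  proof (rule linearI)
    fix x y :: 'x and c :: real
    show "Tm T xs u v \<rho> m p (x + y) = Tm T xs u v \<rho> m p x + Tm T xs u v \<rho> m p y"
      unfolding Tm_def using linear_add[OF lin] linear_add[OF xs(1)] by (simp add: algebra_simps)
    show "Tm T xs u v \<rho> m p (c *\<^sub>R x) = c *\<^sub>R Tm T xs u v \<rho> m p x"
      unfolding Tm_def using linear_scale[OF lin] linear_scale[OF xs(1)] by (simp add: algebra_simps)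
  qed
  show "\<bar>Tm T xs u v \<rho> m p x - Tm T xs u v \<rho> m q x\<bar> \<le> (1 + 1/ln m + 2/m) * dist p q * norm x"
  proof (cases "min 0 (dist p u - \<rho>) \<noteq> 0")
    case True then show ?thesis by (rule Tm_lip_half[OF Tlip xs(2) \<rho> m])
  next
    case hp: False
    show ?thesis
    proof (cases "min 0 (dist q u - \<rho>) \<noteq> 0")
      case True
      then have "\<bar>Tm T xs u v \<rho> m q x - Tm T xs u v \<rho> m p x\<bar> \<le> (1 + 1/ln m + 2/m) * dist q p * norm x"
        by (rule Tm_lip_half[OF Tlip xs(2) \<rho> m])
      then show ?thesis by (simp add: abs_minus_commute dist_commute)
    next
      case False
      have K: "norm x \<ge> 0" by simp
      have "\<bar>Tm T xs u v \<rho> m p x - Tm T xs u v \<rho> m q x\<bar>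
         = \<bar>(T v x + mu (m*\<rho>) m (dist p v) * (T p x - T v x)) - (T v x + mu (m*\<rho>) m (dist q v) * (T q x - T v x))\<bar>"
        unfolding Tm_def using hp False by simp
      also have "\<dots> \<le> norm x * (1 + 1 / ln m) * dist p q"
        by (rule cutoff_lip[OF r m1 K]) (use Tlip in \<open>simp add: mult.commute\<close>)
      also have "\<dots> \<le> (1 + 1/ln m + 2/m) * dist p q * norm x"
        using m by (simp add: algebra_simps mult_right_mono)
      finally show ?thesis .
    qed
  qed
  show "Tm T xs u v \<rho> m t x = T t x" if t: "t = v \<or> m * m * \<rho> \<le> dist t v"
    using t
  proof
    assume "t = v" then show ?thesis unfolding Tm_def using \<rho> r by (simp add: mu_small dist_commute)
  next
    assume tv: "m * m * \<rho> \<le> dist t v"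
    have mu1: "mu (m*\<rho>) m (dist t v) = 1" using tv by (intro mu_big[OF r m1]) (simp add: mult_ac)
    have "dist t v \<le> dist t u + dist u v" by (rule dist_triangle)
    moreover have "m * m * \<rho> \<ge> 2 * \<rho>"
    proof -
      have "2 \<le> m * m" using m mult_mono[of 4 m 4 m] by simp
      then show ?thesis using \<rho> by (intro mult_right_mono) auto
    qed
    ultimately have "dist t u \<ge> \<rho>" using tv \<rho>(1) by simp
    then show ?thesis unfolding Tm_def using mu1 by simp
  qed
  show "Tm T xs u v \<rho> m u x - Tm T xs u v \<rho> m v x = - \<rho> * xs x"
  proof -
    have "mu (m*\<rho>) m (dist u v) = 0" using \<rho> m by (intro mu_small) simp
    moreover have "mu (m*\<rho>) m (dist v v) = 0" using r by (intro mu_small) simp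
    ultimately show ?thesis unfolding Tm_def using \<rho> by (simp add: dist_commute)
  qed
qed

lemma pair_select:
  fixes S :: "'m::metric_space set"
  assumes nud: "\<not> uniformly_discrete (UNIV::'m set)" and S: "finite S" and K: "K \<ge> 1"
  shows "\<exists>u v. u \<noteq> v \<and> (\<forall>t\<in>S. t \<noteq> v \<longrightarrow> K * dist u v \<le> dist t v)"
proof -
  have close: "\<exists>x y::'m. x \<noteq> y \<and> dist x y < \<delta>" if "\<delta> > 0" for \<delta>
  proof (rule ccontr)
    assume "\<not> (\<exists>x y::'m. x \<noteq> y \<and> dist x y < \<delta>)"
    then have "\<forall>x\<in>(UNIV::'m set). \<forall>y\<in>UNIV. x \<noteq> y \<longrightarrow> \<delta> \<le> dist x y" by (meson not_less)
    then show False using nud that unfolding uniformly_discrete_def by blast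
  qed
  define D where "D = insert 1 ((\<lambda>(s,t). dist s t) ` {(s,t). s \<in> S \<and> t \<in> S \<and> s \<noteq> t})"
  have fD: "finite D" unfolding D_def
    by (rule finite_insert[THEN iffD2], rule finite_imageI, rule finite_subset[of _ "S \<times> S"]) (use S in auto)
  have Dpos: "\<forall>d\<in>D. d > 0" unfolding D_def by auto
  define \<delta>0 where "\<delta>0 = Min D"
  have d0: "\<delta>0 > 0" unfolding \<delta>0_def using fD Dpos by (subst Min_gr_iff) (auto simp: D_def)
  have d0le: "\<delta>0 \<le> dist s t" if "s \<in> S" "t \<in> S" "s \<noteq> t" for s t
    unfolding \<delta>0_def using fD that by (intro Min_le) (auto simp: D_def)
  obtain a b :: 'm where ab: "a \<noteq> b" "dist a b < \<delta>0 / (K*K)" using close[of "\<delta>0/(K*K)"] d0 K by auto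
  show ?thesis
  proof (cases "\<forall>t\<in>S. t \<noteq> b \<longrightarrow> K * dist a b \<le> dist t b")
    case True then show ?thesis using ab by blast
  next
    case False
    then obtain s where s: "s \<in> S" "s \<noteq> b" "dist s b < K * dist a b" by auto
    have "\<forall>t\<in>S. t \<noteq> s \<longrightarrow> K * dist b s \<le> dist t s"
    proof (intro ballI impI)
      fix t assume t: "t \<in> S" "t \<noteq> s"
      have "K * dist b s \<le> K * (K * dist a b)" using s K by (simp add: dist_commute)
      also have "\<dots> = (K*K) * dist a b" by simp
      also have "\<dots> \<le> \<delta>0" using ab(2) K by (simp add: field_simps)
      also have "\<dots> \<le> dist t s" using d0le[OF t(1) s(1) t(2)] .
      finally show "K * dist b s \<le> dist t s" .
    qed
    then show ?thesis using s(2) by (metis)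
  qed
qed

definition agree :: "'m::metric_space \<Rightarrow> 'm set \<Rightarrow> ((('m \<Rightarrow> real) \<Rightarrow> real) \<Rightarrow> 'x \<Rightarrow> real) \<Rightarrow> ((('m \<Rightarrow> real) \<Rightarrow> real) \<Rightarrow> 'x \<Rightarrow> real) \<Rightarrow> bool" where
  "agree p0 S B B' \<longleftrightarrow> (\<forall>p\<in>S. \<forall>x. B (dlt p0 p) x = B' (dlt p0 p) x)"

definition detm :: "'m::metric_space \<Rightarrow> 'm set \<Rightarrow> (((('m \<Rightarrow> real) \<Rightarrow> real) \<Rightarrow> 'x::real_normed_vector \<Rightarrow> real) \<Rightarrow> real) \<Rightarrow> bool" where
  "detm p0 S \<Phi> \<longleftrightarrow> (\<forall>B\<in>BL p0. \<forall>B'\<in>BL p0. agree p0 S B B' \<longrightarrow> \<Phi> B = \<Phi> B')"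

lemma agree_mono: "agree p0 S B B' \<Longrightarrow> S' \<subseteq> S \<Longrightarrow> agree p0 S' B B'"
  unfolding agree_def by blast

lemma span_dlt_det:
  fixes p0 :: "'m::metric_space"
  assumes "\<phi> \<in> span (range (dlt p0))"
  shows "\<phi> \<in> free_space p0 \<and> (\<exists>S. finite S \<and> (\<forall>B\<in>BL p0. \<forall>B'\<in>BL p0. agree p0 S B B' \<longrightarrow> (\<forall>x::'x::real_normed_vector. B \<phi> x = B' \<phi> x)))"
  using assms
proof (induction rule: span_induct_alt)
  case base
  have "B 0 x = 0" if "B \<in> BL p0" for B :: "(('m \<Rightarrow> real) \<Rightarrow> real) \<Rightarrow> 'x \<Rightarrow> real" and x
    by (rule lin_on_zero[OF bilD(1)[OF that] V_zero])
  then have "\<forall>B\<in>BL p0. \<forall>B'\<in>BL p0. agree p0 {} B B' \<longrightarrow> (\<forall>x::'x. B 0 x = B' 0 x)" by metis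
  then show ?case using V_zero[of p0] finite.emptyI by blast
next
  case (step c g y)
  then obtain p where p: "g = dlt p0 p" by blast
  obtain S where S: "finite S" "\<forall>B\<in>BL p0. \<forall>B'\<in>BL p0. agree p0 S B B' \<longrightarrow> (\<forall>x::'x. B y x = B' y x)"
    using step by blast
  have yV: "y \<in> free_space p0" using step by blast
  have "\<forall>B\<in>BL p0. \<forall>B'\<in>BL p0. agree p0 (insert p S) B B' \<longrightarrow> (\<forall>x::'x. B (c *\<^sub>R g + y) x = B' (c *\<^sub>R g + y) x)"
  proof (intro ballI impI allI)
    fix B B' :: "(('m \<Rightarrow> real) \<Rightarrow> real) \<Rightarrow> 'x \<Rightarrow> real" and x :: 'x
    assume B: "B \<in> BL p0" "B' \<in> BL p0" and ag: "agree p0 (insert p S) B B'"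
    have "B (c *\<^sub>R g + y) x = c * B g x + B y x"
      using bilD(1)[OF B(1), of x] V_dlt[of p0 p] yV unfolding lin_on_def p by blast
    moreover have "B' (c *\<^sub>R g + y) x = c * B' g x + B' y x"
      using bilD(1)[OF B(2), of x] V_dlt[of p0 p] yV unfolding lin_on_def p by blast
    moreover have "B g x = B' g x" using ag unfolding agree_def p by blast
    moreover have "B y x = B' y x" using S(2) B agree_mono[OF ag, of S] by blast
    ultimately show "B (c *\<^sub>R g + y) x = B' (c *\<^sub>R g + y) x" by simp
  qed
  moreover have "c *\<^sub>R g + y \<in> free_space p0" using V_lin[OF _ yV] p V_dlt by blast
  ultimately show ?case using S(1) by blast
qed

lemma elem_approx:
  fixes p0 :: "'m::metric_space" and x :: "'x::real_normed_vector"
  assumes v: "v \<in> free_space p0" and e: "e > 0"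
  shows "\<exists>S \<Phi>. finite S \<and> detm p0 S \<Phi> \<and> (\<forall>B\<in>BL p0. \<bar>B v x - \<Phi> B\<bar> \<le> e * BN p0 B)"
proof -
  have e1: "e / (norm x + 1) > 0" using e by (simp add: add_nonneg_pos)
  obtain \<psi> where \<psi>: "\<psi> \<in> span (range (dlt p0))" "free_norm p0 (v - \<psi>) < e / (norm x + 1)"
    using v e1 unfolding free_space_eq free_norm_def closed_span_dual_def by blast
  obtain S where S: "finite S" "\<forall>B\<in>BL p0. \<forall>B'\<in>BL p0. agree p0 S B B' \<longrightarrow> (\<forall>x::'x. B \<psi> x = B' \<psi> x)"
    and \<psi>V: "\<psi> \<in> free_space p0" using span_dlt_det[OF \<psi>(1)] by blast
  define \<Phi> where "\<Phi> B = B \<psi> x" for B :: "(('m \<Rightarrow> real) \<Rightarrow> real) \<Rightarrow> 'x \<Rightarrow> real"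
  have "detm p0 S \<Phi>" unfolding detm_def \<Phi>_def using S(2) by blast
  moreover have "\<bar>B v x - \<Phi> B\<bar> \<le> e * BN p0 B" if B: "B \<in> BL p0" for B
  proof -
    have "B v x - \<Phi> B = B (v - \<psi>) x" unfolding \<Phi>_def by (rule lin_on_diff[OF bilD(1)[OF B] v \<psi>V, symmetric])
    also have "\<bar>\<dots>\<bar> \<le> BN p0 B * free_norm p0 (v - \<psi>) * norm x" by (rule bil_bound[OF B V_diff[OF v \<psi>V]])
    also have "\<dots> \<le> BN p0 B * (e / (norm x + 1)) * norm x"
      using \<psi>(2) bilnorm_nonneg[OF B] by (intro mult_right_mono mult_left_mono) auto
    also have "\<dots> = e * BN p0 B * (norm x / (norm x + 1))" by (simp add: field_simps)
    also have "\<dots> \<le> e * BN p0 B * 1"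
    proof -
      have "norm x / (norm x + 1) \<le> 1" by (simp add: pos_divide_le_eq add_nonneg_pos)
      then show ?thesis using e bilnorm_nonneg[OF B] by (intro mult_left_mono) auto
    qed
    finally show ?thesis by simp
  qed
  ultimately show ?thesis using S(1) by blast
qed

lemma span_GT_approx:
  fixes p0 :: "'m::metric_space"
  assumes "\<psi> \<in> span (GT p0 :: (((('m \<Rightarrow> real) \<Rightarrow> real) \<Rightarrow> 'x::real_normed_vector \<Rightarrow> real) \<Rightarrow> real) set)"
  shows "\<forall>e>0. \<exists>S \<Phi>. finite S \<and> detm p0 S \<Phi> \<and> (\<forall>B\<in>BL p0. \<bar>\<psi> B - \<Phi> B\<bar> \<le> e * BN p0 B)"
  using assms
proof (induction rule: span_induct_alt)
  case base
  show ?case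
  proof (intro allI impI)
    fix e :: real assume e: "e > 0"
    have "detm p0 {} (\<lambda>B. 0)" unfolding detm_def by simp
    moreover have "\<forall>B\<in>BL p0. \<bar>(0::(((('m \<Rightarrow> real) \<Rightarrow> real) \<Rightarrow> 'x \<Rightarrow> real) \<Rightarrow> real)) B - 0\<bar> \<le> e * BN p0 B"
      using e bilnorm_nonneg[of _ p0] by (auto intro!: mult_nonneg_nonneg)
    ultimately show "\<exists>S \<Phi>. finite S \<and> detm p0 S \<Phi> \<and> (\<forall>B\<in>BL p0. \<bar>(0::(((('m \<Rightarrow> real) \<Rightarrow> real) \<Rightarrow> 'x \<Rightarrow> real) \<Rightarrow> real)) B - \<Phi> B\<bar> \<le> e * BN p0 B)"
      by blast
  qed
next
  case (step c g y)
  show ?case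
  proof (intro allI impI)
    fix e :: real assume e: "e > 0"
    obtain v x where g: "g = restr (BL p0) (\<lambda>B. B v x)" "v \<in> free_space p0" using step(1) unfolding GT_def by blast
    have e1: "e / (2 * (\<bar>c\<bar> + 1)) > 0" using e by (simp add: add_nonneg_pos)
    obtain S1 \<Phi>1 where 1: "finite S1" "detm p0 S1 \<Phi>1" "\<forall>B\<in>BL p0. \<bar>B v x - \<Phi>1 B\<bar> \<le> e / (2 * (\<bar>c\<bar> + 1)) * BN p0 B"
      using elem_approx[OF g(2) e1, of x] by blast
    obtain S2 \<Phi>2 where 2: "finite S2" "detm p0 S2 \<Phi>2" "\<forall>B\<in>BL p0. \<bar>y B - \<Phi>2 B\<bar> \<le> e / 2 * BN p0 B"
      using step(2) e by (meson half_gt_zero)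
    define \<Phi> where "\<Phi> B = c * \<Phi>1 B + \<Phi>2 B" for B
    have "detm p0 (S1 \<union> S2) \<Phi>" unfolding detm_def \<Phi>_def
      using 1(2) 2(2) agree_mono unfolding detm_def by (metis sup_ge1 sup_ge2)
    moreover have "\<bar>(c *\<^sub>R g + y) B - \<Phi> B\<bar> \<le> e * BN p0 B" if B: "B \<in> BL p0" for B
    proof -
      have "(c *\<^sub>R g + y) B - \<Phi> B = c * (B v x - \<Phi>1 B) + (y B - \<Phi>2 B)"
        using B unfolding g(1) \<Phi>_def restr_def by (simp add: algebra_simps)
      also have "\<bar>\<dots>\<bar> \<le> \<bar>c\<bar> * \<bar>B v x - \<Phi>1 B\<bar> + \<bar>y B - \<Phi>2 B\<bar>" by (metis abs_mult abs_triangle_ineq)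
      also have "\<dots> \<le> \<bar>c\<bar> * (e / (2 * (\<bar>c\<bar> + 1)) * BN p0 B) + e / 2 * BN p0 B"
        using 1(3) 2(3) B by (intro add_mono mult_left_mono) auto
      also have "\<dots> = (e/2) * BN p0 B * (\<bar>c\<bar> / (\<bar>c\<bar> + 1)) + e / 2 * BN p0 B" by (simp add: field_simps)
      also have "\<dots> \<le> (e/2) * BN p0 B * 1 + e / 2 * BN p0 B"
        using e bilnorm_nonneg[OF B] by (intro add_mono mult_left_mono) auto
      finally show ?thesis by simp
    qed
    ultimately show "\<exists>S \<Phi>. finite S \<and> detm p0 S \<Phi> \<and> (\<forall>B\<in>BL p0. \<bar>(c *\<^sub>R g + y) B - \<Phi> B\<bar> \<le> e * BN p0 B)"
      using 1(1) 2(1) by blast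
  qed
qed

lemma approx_pt:
  fixes p0 :: "'m::metric_space"
  assumes z: "z \<in> (ptensor (free_space p0) (free_norm p0) :: (((('m \<Rightarrow> real) \<Rightarrow> real) \<Rightarrow> 'x::real_normed_vector \<Rightarrow> real) \<Rightarrow> real) set)"
    and e: "e > 0"
  shows "\<exists>S \<Phi>. finite S \<and> detm p0 S \<Phi> \<and> (\<forall>B\<in>BL p0. \<bar>z B - \<Phi> B\<bar> \<le> e * BN p0 B)"
proof -
  have e2: "e/2 > 0" using e by simp
  obtain \<psi> where \<psi>: "\<psi> \<in> span (GT p0)" "dual_norm (BL p0) (BN p0) (z - \<psi>) < e/2"
    using z e2 unfolding ptensor_eq closed_span_dual_def by blast
  obtain S \<Phi> where S: "finite S" "detm p0 S \<Phi>" "\<forall>B\<in>BL p0. \<bar>\<psi> B - \<Phi> B\<bar> \<le> e/2 * BN p0 B"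
    using span_GT_approx[OF \<psi>(1)] e2 by blast
  have zd: "z - \<psi> \<in> dual_space (BL p0) (BN p0)"
    by (rule dual_space_diff[OF PT_dual[OF z] dual_space_span[OF GT_dual \<psi>(1)]])
  have "\<bar>z B - \<Phi> B\<bar> \<le> e * BN p0 B" if B: "B \<in> BL p0" for B
  proof -
    have "\<bar>(z - \<psi>) B\<bar> \<le> dual_norm (BL p0) (BN p0) (z - \<psi>) * BN p0 B" by (rule PT_bound[OF zd B])
    also have "\<dots> \<le> e/2 * BN p0 B" using \<psi>(2) bilnorm_nonneg[OF B] by (intro mult_right_mono) auto
    finally have "\<bar>z B - \<psi> B\<bar> \<le> e/2 * BN p0 B" by simp
    moreover have "\<bar>\<psi> B - \<Phi> B\<bar> \<le> e/2 * BN p0 B" using S(3) B by blast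
    moreover have "\<bar>z B - \<Phi> B\<bar> \<le> \<bar>z B - \<psi> B\<bar> + \<bar>\<psi> B - \<Phi> B\<bar>" by linarith
    ultimately show ?thesis by linarith
  qed
  then show ?thesis using S(1,2) by blast
qed

lemma ptnorm_eq: "ptnorm (free_space p0) (free_norm p0) = dual_norm (BL p0) (BN p0)"
  unfolding ptnorm_def ..

lemma norming:
  fixes p0 :: "'m::metric_space"
    and z :: "((('m \<Rightarrow> real) \<Rightarrow> real) \<Rightarrow> 'x::real_normed_vector \<Rightarrow> real) \<Rightarrow> real"
  assumes z: "z \<in> ptensor (free_space p0) (free_norm p0)"
    and n: "ptnorm (free_space p0) (free_norm p0) z = 1" and e: "e > 0"
  shows "\<exists>B\<in>BL p0. BN p0 B \<le> 1 \<and> z B \<ge> 1 - e"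
proof -
  let ?Y = "{\<bar>z B\<bar> | B. B \<in> BL p0 \<and> BN p0 B \<le> 1}"
  have "Sup ?Y = 1" using n unfolding ptnorm_eq dual_norm_def .
  moreover have "?Y \<noteq> {}" using bil_unit[of p0] by blast
  ultimately obtain t where "t \<in> ?Y" "1 - e < t" using less_cSupD[of ?Y "1 - e"] e by auto
  then obtain B where B: "B \<in> BL p0" "BN p0 B \<le> 1" "1 - e < \<bar>z B\<bar>" by blast
  have lz: "lin_on (BL p0) z" using PT_dual[OF z] unfolding dual_space_def by blast
  show ?thesis
  proof (cases "z B \<ge> 0")
    case True then show ?thesis using B by auto
  next
    case False
    have B2: "(-1) *\<^sub>R B \<in> BL p0" by (rule bil_scale[OF B(1)])
    have "BN p0 ((-1) *\<^sub>R B) \<le> 1" using bil_neg_val[OF B(1)] B(2) by simp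
    moreover have "z ((-1) *\<^sub>R B) = - z B" using lin_on_scale[OF lz bil_zero B(1), of "-1"] by simp
    ultimately show ?thesis using B2 B(3) False by (intro bexI[OF _ B2]) auto
  qed
qed

lemma mod_B:
  fixes T :: "'m::metric_space \<Rightarrow> 'x::real_normed_vector \<Rightarrow> real" and p0 :: 'm
  assumes lin: "\<And>p. linear (T p)" and Tlip: "\<And>p q x. \<bar>T p x - T q x\<bar> \<le> dist p q * norm x"
    and T0: "\<And>x. T p0 x = 0"
    and xs: "linear xs" "\<And>x. \<bar>xs x\<bar> \<le> norm x"
    and \<rho>: "\<rho> = dist u v" "\<rho> > 0" and m: "m \<ge> 4"
    and S: "p0 \<in> S" "\<forall>t\<in>S. t \<noteq> v \<longrightarrow> m * m * \<rho> \<le> dist t v"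
  shows "BT p0 (Tm T xs u v \<rho> m) \<in> BL p0" "BN p0 (BT p0 (Tm T xs u v \<rho> m)) \<le> 1 + 1/ln m + 2/m"
    "\<And>p x. p \<in> S \<Longrightarrow> BT p0 (Tm T xs u v \<rho> m) (dlt p0 p) x = T p x"
    "BT p0 (Tm T xs u v \<rho> m) (dlt p0 u) x - BT p0 (Tm T xs u v \<rho> m) (dlt p0 v) x = - \<rho> * xs x"
proof -
  note tp = Tm_props[OF lin Tlip xs \<rho> m]
  have onS: "Tm T xs u v \<rho> m t x = T t x" if "t \<in> S" for t x using S that by (intro tp(3)) auto
  have C: "1 + 1/ln m + 2/m \<ge> 0" using m by (simp add: add_nonneg_nonneg)
  have lin': "\<And>p. linear (Tm T xs u v \<rho> m p)" using tp(1) .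
  have T0': "\<And>x. Tm T xs u v \<rho> m p0 x = 0" using onS[OF S(1)] T0 by simp
  have lip': "\<And>p q x. \<bar>Tm T xs u v \<rho> m p x - Tm T xs u v \<rho> m q x\<bar> \<le> (1 + 1/ln m + 2/m) * dist p q * norm x"
    using tp(2) .
  note bp = BT_props[OF lin' T0' C lip']
  show "BT p0 (Tm T xs u v \<rho> m) \<in> BL p0" using bp(1) .
  show "BN p0 (BT p0 (Tm T xs u v \<rho> m)) \<le> 1 + 1/ln m + 2/m" using bp(2) .
  show "BT p0 (Tm T xs u v \<rho> m) (dlt p0 p) x = T p x" if "p \<in> S" for p x
    using bp(3) onS[OF that] by simp
  show "BT p0 (Tm T xs u v \<rho> m) (dlt p0 u) x - BT p0 (Tm T xs u v \<rho> m) (dlt p0 v) x = - \<rho> * xs x"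
    using bp(3) tp(4) by simp
qed

lemma final_arith:
  fixes \<epsilon> \<epsilon>1 e C :: real
  assumes "\<epsilon>1 = min \<epsilon> 1" "\<epsilon> > 0" "e = \<epsilon>1/16" "1 \<le> C" "C \<le> 1 + \<epsilon>1/4" "t \<ge> 2 - 2*e - e*C"
  shows "t / C \<ge> 2 - \<epsilon>"
proof -
  have e1: "0 < \<epsilon>1" "\<epsilon>1 \<le> 1" "\<epsilon>1 \<le> \<epsilon>" using assms(1,2) by auto
  have "e * C \<le> e * 2" using assms(3,5) e1 by (intro mult_left_mono) auto
  then have t: "t \<ge> 2 - \<epsilon>1/4" using assms(3,6) by linarith
  have "(2 - \<epsilon>1) * C \<le> (2 - \<epsilon>1) * (1 + \<epsilon>1/4)" using assms(5) e1 by (intro mult_left_mono) auto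
  also have "\<dots> = 2 - \<epsilon>1/2 - \<epsilon>1*\<epsilon>1/4" by (simp add: field_simps)
  also have "\<dots> \<le> 2 - \<epsilon>1/4"
  proof -
    have "0 \<le> \<epsilon>1*\<epsilon>1" using e1 by simp
    then show ?thesis using e1 by linarith
  qed
  finally have "(2 - \<epsilon>1) * C \<le> t" using t by simp
  then have "2 - \<epsilon>1 \<le> t / C" using assms(4) by (simp add: pos_le_divide_eq)
  then show ?thesis using e1 by simp
qed

theorem theorem4p1:
  fixes p0 :: "'m::metric_space"
  assumes "\<not> uniformly_discrete (UNIV :: 'm set)"
    and "\<exists>x::'x::banach. x \<noteq> 0"
  shows "octahedral
           (ptensor (free_space p0) (free_norm p0) :: ((((('m \<Rightarrow> real) \<Rightarrow> real) \<Rightarrow> 'x \<Rightarrow> real) \<Rightarrow> real) set))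
           (ptnorm (free_space p0) (free_norm p0))"
proof -
  obtain x0 :: 'x where x0: "x0 \<noteq> 0" using assms(2) by blast
  obtain xs where xs: "linear xs" "\<And>x. \<bar>xs x\<bar> \<le> norm x" "xs x0 = norm x0"
    using hahn_banach_norming[OF x0] by blast
  let ?Z = "ptensor (free_space p0) (free_norm p0) :: ((((('m \<Rightarrow> real) \<Rightarrow> real) \<Rightarrow> 'x \<Rightarrow> real) \<Rightarrow> real) set)"
  let ?N = "dual_norm (BL p0) (BN p0) :: ((((('m \<Rightarrow> real) \<Rightarrow> real) \<Rightarrow> 'x \<Rightarrow> real) \<Rightarrow> real) \<Rightarrow> real)"
  show ?thesis unfolding octahedral_def ptnorm_eq
  proof (rule allI, rule impI, elim conjE)
    fix A assume fin: "finite A" and Asub: "A \<subseteq> {z \<in> ?Z. ?N z = 1}"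
    show "\<forall>\<epsilon>>0. \<exists>y\<in>?Z. ?N y = 1 \<and> (\<forall>x\<in>A. 2 - \<epsilon> \<le> ?N (x - y))"
    proof (intro allI impI)
      fix \<epsilon> :: real assume \<epsilon>: "\<epsilon> > 0"
      define \<epsilon>1 where "\<epsilon>1 = min \<epsilon> 1"
      have \<epsilon>1: "0 < \<epsilon>1" "\<epsilon>1 \<le> 1" using \<epsilon> unfolding \<epsilon>1_def by auto
      define \<eta> where "\<eta> = \<epsilon>1 / 4"
      define e where "e = \<epsilon>1 / 16"
      have e: "e > 0" using \<epsilon>1 unfolding e_def by simp
      have \<eta>: "\<eta> > 0" using \<epsilon>1 unfolding \<eta>_def by simp
      define m where "m = max 4 (max (exp (2/\<eta>)) (4/\<eta>))"
      have m4: "m \<ge> 4" unfolding m_def by simp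
      have lm: "ln m \<ge> 2/\<eta>"
      proof -
        have "exp (2/\<eta>) \<le> m" unfolding m_def by simp
        then have "ln (exp (2/\<eta>)) \<le> ln m" using m4 by (subst ln_le_cancel_iff) auto
        then show ?thesis by simp
      qed
      define C where "C = 1 + 1/ln m + 2/m"
      have C1: "1 \<le> C" unfolding C_def using m4 lm \<eta> by (simp add: add_nonneg_nonneg)
      have Cle: "C \<le> 1 + \<epsilon>1/4"
      proof -
        have lmp: "ln m > 0" using lm \<eta> by (smt (verit) divide_pos_pos)
        have "1/ln m \<le> \<eta>/2" using lm \<eta> lmp by (simp add: field_simps)
        moreover have "2/m \<le> \<eta>/2"
        proof -
          have "4/\<eta> \<le> m" unfolding m_def by simp
          then show ?thesis using \<eta> m4 by (simp add: field_simps)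
        qed
        ultimately show ?thesis unfolding C_def \<eta>_def by simp
      qed
      have Cpos: "C > 0" using C1 by simp
      have ex: "\<forall>z\<in>A. \<exists>B S \<Phi>. B \<in> BL p0 \<and> BN p0 B \<le> 1 \<and> z B \<ge> 1 - e \<and> finite S \<and> detm p0 S \<Phi>
                 \<and> (\<forall>B'\<in>BL p0. \<bar>z B' - \<Phi> B'\<bar> \<le> e * BN p0 B')"
      proof
        fix z assume "z \<in> A"
        then have z: "z \<in> ?Z" "?N z = 1" using Asub by auto
        obtain B where B: "B \<in> BL p0" "BN p0 B \<le> 1" "z B \<ge> 1 - e"
          using norming[OF z(1) _ e] z(2) unfolding ptnorm_eq by blast
        obtain S \<Phi> where "finite S" "detm p0 S \<Phi>" "\<forall>B'\<in>BL p0. \<bar>z B' - \<Phi> B'\<bar> \<le> e * BN p0 B'"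
          using approx_pt[OF z(1) e] by blast
        then show "\<exists>B S \<Phi>. B \<in> BL p0 \<and> BN p0 B \<le> 1 \<and> z B \<ge> 1 - e \<and> finite S \<and> detm p0 S \<Phi>
                 \<and> (\<forall>B'\<in>BL p0. \<bar>z B' - \<Phi> B'\<bar> \<le> e * BN p0 B')" using B by blast
      qed
      obtain fB where fB: "\<forall>z\<in>A. \<exists>S \<Phi>. fB z \<in> BL p0 \<and> BN p0 (fB z) \<le> 1 \<and> z (fB z) \<ge> 1 - e \<and> finite S \<and> detm p0 S \<Phi>
                 \<and> (\<forall>B'\<in>BL p0. \<bar>z B' - \<Phi> B'\<bar> \<le> e * BN p0 B')"
        using bchoice[OF ex] by blast
      obtain fS where fS: "\<forall>z\<in>A. \<exists>\<Phi>. fB z \<in> BL p0 \<and> BN p0 (fB z) \<le> 1 \<and> z (fB z) \<ge> 1 - e \<and> finite (fS z) \<and> detm p0 (fS z) \<Phi>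
                 \<and> (\<forall>B'\<in>BL p0. \<bar>z B' - \<Phi> B'\<bar> \<le> e * BN p0 B')"
        using bchoice[OF fB] by blast
      obtain f\<Phi> where f: "\<forall>z\<in>A. fB z \<in> BL p0 \<and> BN p0 (fB z) \<le> 1 \<and> z (fB z) \<ge> 1 - e
            \<and> finite (fS z) \<and> detm p0 (fS z) (f\<Phi> z) \<and> (\<forall>B'\<in>BL p0. \<bar>z B' - f\<Phi> z B'\<bar> \<le> e * BN p0 B')"
        using bchoice[OF fS] by blast
      define Sa where "Sa = insert p0 (\<Union>z\<in>A. fS z)"
      have fSa: "finite Sa" unfolding Sa_def using fin f by auto
      have mm: "m * m \<ge> 1" using m4 mult_mono[of 1 m 1 m] by simp
      obtain u v where uv: "u \<noteq> v" "\<forall>t\<in>Sa. t \<noteq> v \<longrightarrow> (m * m) * dist u v \<le> dist t v"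
        using pair_select[OF assms(1) fSa mm] by blast
      define \<rho> where "\<rho> = dist u v"
      have \<rho>: "\<rho> = dist u v" "\<rho> > 0" using uv(1) unfolding \<rho>_def by auto
      have Sa: "p0 \<in> Sa" "\<forall>t\<in>Sa. t \<noteq> v \<longrightarrow> m * m * \<rho> \<le> dist t v" using uv(2) unfolding Sa_def \<rho>_def by auto
      note mB = mod_B[OF _ _ _ xs(1,2) \<rho> m4 Sa]
      define w where "w = restr (BL p0) (\<lambda>B. B (dlt p0 u - dlt p0 v) x0)"
      have wZ: "w \<in> ?Z" unfolding w_def by (rule PT_elem[OF V_diff[OF V_dlt V_dlt]])
      have wd: "w \<in> dual_space (BL p0) (BN p0)" by (rule PT_dual[OF wZ])
      have wval: "w B = B (dlt p0 u) x0 - B (dlt p0 v) x0" if "B \<in> BL p0" for B :: "(('m \<Rightarrow> real) \<Rightarrow> real) \<Rightarrow> 'x \<Rightarrow> real"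
        unfolding w_def restr_def using that by (simp add: lin_on_diff[OF bilD(1)[OF that] V_dlt V_dlt])
      have Nw_le: "?N w \<le> \<rho> * norm x0"
      proof (rule dual_norm_least[where S="BL p0" and N="BN p0", OF bil_unit])
        fix B :: "(('m \<Rightarrow> real) \<Rightarrow> real) \<Rightarrow> 'x \<Rightarrow> real" assume B: "B \<in> BL p0" "BN p0 B \<le> 1"
        have "\<bar>w B\<bar> = \<bar>B (dlt p0 u - dlt p0 v) x0\<bar>" unfolding w_def restr_def using B by simp
        also have "\<dots> \<le> BN p0 B * free_norm p0 (dlt p0 u - dlt p0 v) * norm x0"
          by (rule bil_bound[OF B(1) V_diff[OF V_dlt V_dlt]])
        also have "\<dots> \<le> 1 * \<rho> * norm x0"
          using B(2) NV_dlt_diff[of p0 u v] bilnorm_nonneg[OF B(1)] NV_nonneg[OF V_diff[OF V_dlt V_dlt], of p0 u v]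
          unfolding \<rho>(1) by (intro mult_right_mono mult_mono) auto
        finally show "\<bar>w B\<bar> \<le> \<rho> * norm x0" by simp
      qed
      have Nw_pos: "?N w > 0"
      proof -
        let ?T0 = "(\<lambda>p x. 0) :: 'm \<Rightarrow> 'x \<Rightarrow> real"
        have l0: "\<And>p. linear (?T0 p)" by (simp add: linearI)
        have z1: "\<And>p q x. \<bar>?T0 p x - ?T0 q x\<bar> \<le> dist p q * norm x" by simp
        have z2: "\<And>x. ?T0 p0 x = 0" by simp
        note m0 = mB[OF l0 z1 z2]
        define B0 where "B0 = (1/C) *\<^sub>R BT p0 (Tm ?T0 xs u v \<rho> m)"
        have B0: "B0 \<in> BL p0" unfolding B0_def by (rule bil_scale[OF m0(1)])
        have "BN p0 B0 \<le> \<bar>1/C\<bar> * BN p0 (BT p0 (Tm ?T0 xs u v \<rho> m))"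
          unfolding B0_def by (rule bilnorm_scale_le[OF m0(1)])
        also have "\<dots> = (1/C) * BN p0 (BT p0 (Tm ?T0 xs u v \<rho> m))" using Cpos by simp
        also have "\<dots> \<le> (1/C) * C" using m0(2) Cpos unfolding C_def by (intro mult_left_mono) auto
        finally have B0n: "BN p0 B0 \<le> 1" using Cpos by simp
        have "w B0 = (1/C) * (- \<rho> * xs x0)"
          unfolding wval[OF B0] unfolding B0_def using m0(4)[of x0] by (simp add: diff_divide_distrib[symmetric])
        then have "\<bar>w B0\<bar> = \<rho> * norm x0 / C" using xs(3) \<rho> Cpos by (simp add: abs_mult)
        moreover have "\<bar>w B0\<bar> \<le> ?N w" by (rule dual_norm_upper[where S="BL p0" and N="BN p0", OF wd B0 B0n])
        moreover have "\<rho> * norm x0 / C > 0" using \<rho> x0 Cpos by simp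
        ultimately show ?thesis by linarith
      qed
      define y where "y = (1 / ?N w) *\<^sub>R w"
      have yZ: "y \<in> ?Z" unfolding y_def by (rule PT_scale[OF wZ])
      have Ny: "?N y = 1" unfolding y_def using dual_norm_scale[where S="BL p0" and N="BN p0", OF wd bil_unit] Nw_pos by simp
      have yval: "y B = (B (dlt p0 u) x0 - B (dlt p0 v) x0) / ?N w" if "B \<in> BL p0" for B :: "(('m \<Rightarrow> real) \<Rightarrow> real) \<Rightarrow> 'x \<Rightarrow> real"
        unfolding y_def using wval[OF that] by simp
      have "\<forall>z\<in>A. 2 - \<epsilon> \<le> ?N (z - y)"
      proof
        fix z assume zA: "z \<in> A"
        then have zZ: "z \<in> ?Z" using Asub by auto
        have fz: "fB z \<in> BL p0" "BN p0 (fB z) \<le> 1" "z (fB z) \<ge> 1 - e" "detm p0 (fS z) (f\<Phi> z)"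
           "\<forall>B'\<in>BL p0. \<bar>z B' - f\<Phi> z B'\<bar> \<le> e * BN p0 B'" using f zA by auto
        have fSsub: "fS z \<subseteq> Sa" unfolding Sa_def using zA by auto
        define T where "T p x = fB z (dlt p0 p) x" for p x
        note tb = TB_props[OF fz(1)]
        have Tlin: "\<And>p. linear (T p)" unfolding T_def using tb(1) by simp
        have T0: "\<And>x. T p0 x = 0" unfolding T_def using tb(2) by simp
        have Tlip: "\<And>p q x. \<bar>T p x - T q x\<bar> \<le> dist p q * norm x"
        proof -
          fix p q x
          have "\<bar>T p x - T q x\<bar> \<le> BN p0 (fB z) * dist p q * norm x" unfolding T_def by (rule tb(3))
          also have "\<dots> \<le> 1 * dist p q * norm x" using fz(2) by (intro mult_right_mono) auto
          finally show "\<bar>T p x - T q x\<bar> \<le> dist p q * norm x" by simp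
        qed
        note mz = mB[OF Tlin Tlip T0]
        define B' where "B' = BT p0 (Tm T xs u v \<rho> m)"
        have B': "B' \<in> BL p0" "BN p0 B' \<le> C" unfolding B'_def C_def using mz(1,2) by auto
        have ag: "agree p0 (fS z) B' (fB z)" unfolding agree_def B'_def
          using mz(3) fSsub unfolding T_def by auto
        have \<Phi>eq: "f\<Phi> z B' = f\<Phi> z (fB z)" using fz(4) B'(1) fz(1) ag unfolding detm_def by blast
        have "z B' \<ge> f\<Phi> z B' - e * BN p0 B'" using fz(5) B'(1) by force
        moreover have "e * BN p0 B' \<le> e * C" using B'(2) e by (intro mult_left_mono) auto
        moreover have "f\<Phi> z (fB z) \<ge> z (fB z) - e * BN p0 (fB z)" using fz(5) fz(1) by force
        moreover have "e * BN p0 (fB z) \<le> e * 1" using fz(2) e by (intro mult_left_mono) auto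
        ultimately have zB': "z B' \<ge> 1 - 2*e - e * C" using fz(3) \<Phi>eq by linarith
        have "y B' = (- \<rho> * xs x0) / ?N w" unfolding yval[OF B'(1)] using mz(4)[of x0] unfolding B'_def by simp
        also have "\<dots> = - (\<rho> * norm x0 / ?N w)" using xs(3) by simp
        also have "\<dots> \<le> -1" using Nw_le Nw_pos by (simp add: field_simps)
        finally have yB': "y B' \<le> -1" .
        define B'' where "B'' = (1/C) *\<^sub>R B'"
        have B'': "B'' \<in> BL p0" unfolding B''_def by (rule bil_scale[OF B'(1)])
        have "BN p0 B'' \<le> \<bar>1/C\<bar> * BN p0 B'" unfolding B''_def by (rule bilnorm_scale_le[OF B'(1)])
        also have "\<dots> = (1/C) * BN p0 B'" using Cpos by simp
        also have "\<dots> \<le> (1/C) * C" using B'(2) Cpos by (intro mult_left_mono) auto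
        finally have B''n: "BN p0 B'' \<le> 1" using Cpos by simp
        have zyd: "z - y \<in> dual_space (BL p0) (BN p0)" by (rule dual_space_diff[OF PT_dual[OF zZ] PT_dual[OF yZ]])
        have lzy: "lin_on (BL p0) (z - y)" using zyd unfolding dual_space_def by blast
        have "(z - y) B'' = (1/C) * (z - y) B'" unfolding B''_def by (rule lin_on_scale[OF lzy bil_zero B'(1)])
        then have "(z - y) B'' = (z B' - y B') / C" by simp
        moreover have "(z - y) B'' \<le> ?N (z - y)" using dual_norm_upper[where S="BL p0" and N="BN p0", OF zyd B'' B''n] by simp
        moreover have "(z B' - y B') / C \<ge> 2 - \<epsilon>"
          by (rule final_arith[OF \<epsilon>1_def \<epsilon> e_def C1 Cle]) (use zB' yB' in linarith)
        ultimately show "2 - \<epsilon> \<le> ?N (z - y)" by linarith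
      qed
      then show "\<exists>y\<in>?Z. ?N y = 1 \<and> (\<forall>x\<in>A. 2 - \<epsilon> \<le> ?N (x - y))" using yZ Ny by blast
    qed
  qed
qed

end
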